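(* Let $k$ be algebraically closed of characteristic $0$, let $\mathcal A$ be a $k$-conformal superalgebra and $\sigma$ an automorphism of $\mathcal A$ with $\sigma^m=\mathrm{id}$ for some $m\ge1$. Then the twisted loop algebra $\mathcal L(\mathcal A,\sigma)$ is an $\mathcal S_m/\mathcal R$-form of $\mathcal A\otimes_k\mathcal R$; that is, $\mathcal L(\mathcal A,\sigma)\otimes_{\mathcal R}\mathcal S_m\cong(\mathcal A\otimes_k\mathcal R)\otimes_{\mathcal R}\mathcal S_m$ as $\mathcal S_m$-conformal superalgebras.
   Context: Conventions: a differential $k$-ring is $(R,\delta_R)$ with $R$ a commutative unital $k$-algebra and $\delta_R$ a $k$-linear derivation; extensions are morphisms of such pairs commuting with derivations. An $\mathcal R$-conformal superalgebra is a $\mathbb Z/2\mathbb Z$-graded $R$-module $\mathcal A$ with a parity-preserving $k$-linear $\partial_{\mathcal A}$ and $k$-bilinear $n$-products $a_{(n)}b$ ($n\in\mathbb Z_+$) satisfying: $a_{(n)}b=0$ for $n\gg0$; $(\partial_{\mathcal A}a)_{(n)}b=-na_{(n-1)}b$, $a_{(n)}\partial_{\mathcal A}b=\partial_{\mathcal A}(a_{(n)}b)+na_{(n-1)}b$; $\partial_{\mathcal A}(ra)=r\partial_{\mathcal A}a+\delta_R(r)a$; $a_{(n)}(rb)=r(a_{(n)}b)$, $(ra)_{(n)}b=\sum_{j\ge0}\frac{1}{j!}\delta_R^{j}(r)(a_{(n+j)}b)$. Homomorphisms are even $R$-linear maps preserving $n$-products and commuting with $\partial$. A $k$-conformal superalgebra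 is one over $(k,0)$. Base change to an extension $\mathcal S=(S,\delta_S)$: $\mathcal A\otimes_{\mathcal R}\mathcal S$ is $\mathcal A\otimes_RS$ with $\partial=\partial_{\mathcal A}\otimes1+1\otimes\delta_S$ and $(a\otimes r)_{(n)}(b\otimes s)=\sum_j(a_{(n+j)}b)\otimes\frac1{j!}\delta_S^j(r)s$. For an $\mathcal R$-conformal superalgebra $\mathcal A$ and extension $\mathcal S$, an $\mathcal S/\mathcal R$-form of $\mathcal A$ is an $\mathcal R$-conformal superalgebra $\mathcal F$ with $\mathcal F\otimes_{\mathcal R}\mathcal S\cong\mathcal A\otimes_{\mathcal R}\mathcal S$ as $\mathcal S$-conformal superalgebras. Notation: $R=k[t,t^{-1}]$, $S_m=k[t^{1/m},t^{-1/m}]$, $\delta_t=d/dt$, $\mathcal R=(R,\delta_t)$, $\mathcal S_m=(S_m,\delta_t)$; $\mathcal A\otimes_k\mathcal R$ is the base change of $\mathcal A$ from $(k,0)$ to $\mathcal R$. Fix compatible primitive roots of unity $\xi_m\in k$ ($\xi_{\ell m}^\ell=\xi_m$). For $\sigma$ of period $m$ set $\mathcal A_i=\{x\in\mathcal A:\sigma(x)=\xi_m^ix\}$ and $\mathcal L(\mathcal A,\sigma)=\bigoplus_{i\in\mathbb Z}\mathcal A_i\otimes t^{i/m}\subseteq\mathcal A\otimes_k\mathcal S_m$; it is stable under $\partial_{\mathcal A}\otimes1+1\otimes\delta_t$, under all $n$-products of $\mathcal A\otimes_k\mathcal S_m$ and under multiplication by $R$, hence is an $\mathcal R$-conformal superalgebra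 (the twisted loop algebra). *)

theory Defs
  imports Complex_Main "HOL-Library.Poly_Mapping" "HOL-Computational_Algebra.Polynomial"
begin

record ('k, 'r) dring =
  dr_emb :: "'k \<Rightarrow> 'r"
  dr_delta :: "'r \<Rightarrow> 'r"

definition diff_kring :: "('k::field, 'r::comm_ring_1) dring \<Rightarrow> bool" where
  "diff_kring D \<longleftrightarrow>
     dr_emb D 0 = 0 \<and> dr_emb D 1 = 1 \<and>
     (\<forall>x y. dr_emb D (x + y) = dr_emb D x + dr_emb D y) \<and>
     (\<forall>x y. dr_emb D (x * y) = dr_emb D x * dr_emb D y) \<and>
     (\<forall>r s. dr_delta D (r + s) = dr_delta D r + dr_delta D s) \<and>
     (\<forall>r s. dr_delta D (r * s) = r * dr_delta D s + dr_delta D r * s) \<and>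
     (\<forall>c r. dr_delta D (dr_emb D c * r) = dr_emb D c * dr_delta D r)"

definition dring_ext :: "('k::field, 'r::comm_ring_1) dring \<Rightarrow> ('k, 's::comm_ring_1) dring
    \<Rightarrow> ('r \<Rightarrow> 's) \<Rightarrow> bool" where
  "dring_ext D1 D2 \<iota> \<longleftrightarrow> diff_kring D1 \<and> diff_kring D2 \<and>
     \<iota> 1 = 1 \<and> (\<forall>x y. \<iota> (x + y) = \<iota> x + \<iota> y) \<and> (\<forall>x y. \<iota> (x * y) = \<iota> x * \<iota> y) \<and>
     (\<forall>c. \<iota> (dr_emb D1 c) = dr_emb D2 c) \<and>
     (\<forall>r. \<iota> (dr_delta D1 r) = dr_delta D2 (\<iota> r))"

text \<open>The underlying abelian group structure is that of the type 'a (class ab_group_add);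
  the module itself is the subgroup cs_carrier.\<close>

record ('r, 'a) csa =
  cs_carrier :: "'a set"
  cs_even :: "'a set"
  cs_odd :: "'a set"
  cs_smult :: "'r \<Rightarrow> 'a \<Rightarrow> 'a"
  cs_der :: "'a \<Rightarrow> 'a"
  cs_nprod :: "nat \<Rightarrow> 'a \<Rightarrow> 'a \<Rightarrow> 'a"

definition subgroup_of :: "'a::ab_group_add set \<Rightarrow> bool" where
  "subgroup_of X \<longleftrightarrow> 0 \<in> X \<and> (\<forall>x\<in>X. \<forall>y\<in>X. x + y \<in> X) \<and> (\<forall>x\<in>X. - x \<in> X)"

definition graded_module :: "('r::comm_ring_1, 'a::ab_group_add, 'z) csa_scheme \<Rightarrow> bool" where
  "graded_module M \<longleftrightarrow>
     subgroup_of (cs_carrier M) \<and> subgroup_of (cs_even M) \<and> subgroup_of (cs_odd M) \<and>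
     cs_even M \<subseteq> cs_carrier M \<and> cs_odd M \<subseteq> cs_carrier M \<and>
     cs_carrier M = {x + y | x y. x \<in> cs_even M \<and> y \<in> cs_odd M} \<and>
     cs_even M \<inter> cs_odd M = {0} \<and>
     (\<forall>r. \<forall>x\<in>cs_carrier M. cs_smult M r x \<in> cs_carrier M) \<and>
     (\<forall>r. \<forall>x\<in>cs_even M. cs_smult M r x \<in> cs_even M) \<and>
     (\<forall>r. \<forall>x\<in>cs_odd M. cs_smult M r x \<in> cs_odd M) \<and>
     (\<forall>r. \<forall>x\<in>cs_carrier M. \<forall>y\<in>cs_carrier M.
        cs_smult M r (x + y) = cs_smult M r x + cs_smult M r y) \<and>
     (\<forall>r s. \<forall>x\<in>cs_carrier M. cs_smult M (r + s) x = cs_smult M r x + cs_smult M s x) \<and>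
     (\<forall>r s. \<forall>x\<in>cs_carrier M. cs_smult M (r * s) x = cs_smult M r (cs_smult M s x)) \<and>
     (\<forall>x\<in>cs_carrier M. cs_smult M 1 x = x)"

text \<open>The sum over j in the last axiom is finite: it is taken over j < N for any N beyond
  which the products a_(n+j) b vanish (all such N give the same value).\<close>

definition conformal_superalgebra ::
    "('k::field, 'r::comm_ring_1) dring \<Rightarrow> ('r, 'a::ab_group_add, 'z) csa_scheme \<Rightarrow> bool" where
  "conformal_superalgebra D A \<longleftrightarrow>
     diff_kring D \<and> graded_module A \<and>
     (\<forall>a\<in>cs_carrier A. cs_der A a \<in> cs_carrier A) \<and>
     (\<forall>a\<in>cs_even A. cs_der A a \<in> cs_even A) \<and>
     (\<forall>a\<in>cs_odd A. cs_der A a \<in> cs_odd A) \<and>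
     (\<forall>c. \<forall>a\<in>cs_carrier A. \<forall>b\<in>cs_carrier A.
        cs_der A (cs_smult A (dr_emb D c) a + b)
          = cs_smult A (dr_emb D c) (cs_der A a) + cs_der A b) \<and>
     (\<forall>n. \<forall>a\<in>cs_carrier A. \<forall>b\<in>cs_carrier A. cs_nprod A n a b \<in> cs_carrier A) \<and>
     (\<forall>n c. \<forall>a\<in>cs_carrier A. \<forall>a'\<in>cs_carrier A. \<forall>b\<in>cs_carrier A.
        cs_nprod A n (cs_smult A (dr_emb D c) a + a') b
          = cs_smult A (dr_emb D c) (cs_nprod A n a b) + cs_nprod A n a' b) \<and>
     (\<forall>n c. \<forall>a\<in>cs_carrier A. \<forall>b\<in>cs_carrier A. \<forall>b'\<in>cs_carrier A.
        cs_nprod A n a (cs_smult A (dr_emb D c) b + b')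
          = cs_smult A (dr_emb D c) (cs_nprod A n a b) + cs_nprod A n a b') \<and>
     (\<forall>a\<in>cs_carrier A. \<forall>b\<in>cs_carrier A. \<exists>N. \<forall>n\<ge>N. cs_nprod A n a b = 0) \<and>
     (\<forall>n. \<forall>a\<in>cs_carrier A. \<forall>b\<in>cs_carrier A.
        cs_nprod A n (cs_der A a) b = - cs_smult A (of_nat n) (cs_nprod A (n - 1) a b)) \<and>
     (\<forall>n. \<forall>a\<in>cs_carrier A. \<forall>b\<in>cs_carrier A.
        cs_nprod A n a (cs_der A b)
          = cs_der A (cs_nprod A n a b) + cs_smult A (of_nat n) (cs_nprod A (n - 1) a b)) \<and>
     (\<forall>r. \<forall>a\<in>cs_carrier A.
        cs_der A (cs_smult A r a) = cs_smult A r (cs_der A a) + cs_smult A (dr_delta D r) a) \<and>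
     (\<forall>n r. \<forall>a\<in>cs_carrier A. \<forall>b\<in>cs_carrier A.
        cs_nprod A n a (cs_smult A r b) = cs_smult A r (cs_nprod A n a b)) \<and>
     (\<forall>n r N. \<forall>a\<in>cs_carrier A. \<forall>b\<in>cs_carrier A.
        (\<forall>j\<ge>N. cs_nprod A (n + j) a b = 0) \<longrightarrow>
        cs_nprod A n (cs_smult A r a) b
          = (\<Sum>j<N. cs_smult A (dr_emb D (inverse (of_nat (fact j))) * (dr_delta D ^^ j) r)
                                (cs_nprod A (n + j) a b)))"

definition csa_hom ::
    "('r::comm_ring_1, 'a::ab_group_add, 'z1) csa_scheme \<Rightarrow> ('r, 'b::ab_group_add, 'z2) csa_scheme
     \<Rightarrow> ('a \<Rightarrow> 'b) \<Rightarrow> bool" where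
  "csa_hom A B \<phi> \<longleftrightarrow>
     \<phi> ` cs_carrier A \<subseteq> cs_carrier B \<and> \<phi> ` cs_even A \<subseteq> cs_even B \<and>
     \<phi> ` cs_odd A \<subseteq> cs_odd B \<and>
     (\<forall>x\<in>cs_carrier A. \<forall>y\<in>cs_carrier A. \<phi> (x + y) = \<phi> x + \<phi> y) \<and>
     (\<forall>r. \<forall>x\<in>cs_carrier A. \<phi> (cs_smult A r x) = cs_smult B r (\<phi> x)) \<and>
     (\<forall>x\<in>cs_carrier A. \<phi> (cs_der A x) = cs_der B (\<phi> x)) \<and>
     (\<forall>n. \<forall>x\<in>cs_carrier A. \<forall>y\<in>cs_carrier A.
        \<phi> (cs_nprod A n x y) = cs_nprod B n (\<phi> x) (\<phi> y))"

definition csa_iso ::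
    "('r::comm_ring_1, 'a::ab_group_add, 'z1) csa_scheme \<Rightarrow> ('r, 'b::ab_group_add, 'z2) csa_scheme
     \<Rightarrow> ('a \<Rightarrow> 'b) \<Rightarrow> bool" where
  "csa_iso A B \<phi> \<longleftrightarrow> csa_hom A B \<phi> \<and> bij_betw \<phi> (cs_carrier A) (cs_carrier B)"

definition csa_isomorphic ::
    "('r::comm_ring_1, 'a::ab_group_add, 'z1) csa_scheme \<Rightarrow> ('r, 'b::ab_group_add, 'z2) csa_scheme
     \<Rightarrow> bool" where
  "csa_isomorphic A B \<longleftrightarrow> (\<exists>\<phi>. csa_iso A B \<phi>)"

text \<open>Formal finite Z-linear combinations of symbols a \<otimes> s, and the subgroup of relations
  defining the tensor product F \<otimes>_R S along iota : R -> S.\<close>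

inductive_set tens_rel ::
    "('r::comm_ring_1, 'f::ab_group_add, 'z) csa_scheme \<Rightarrow> ('r \<Rightarrow> 's::comm_ring_1)
     \<Rightarrow> ('f \<times> 's \<Rightarrow>\<^sub>0 int) set"
  for F \<iota> where
  rel_zero: "0 \<in> tens_rel F \<iota>"
| rel_add: "x \<in> tens_rel F \<iota> \<Longrightarrow> y \<in> tens_rel F \<iota> \<Longrightarrow> x + y \<in> tens_rel F \<iota>"
| rel_neg: "x \<in> tens_rel F \<iota> \<Longrightarrow> - x \<in> tens_rel F \<iota>"
| rel_addl: "a \<in> cs_carrier F \<Longrightarrow> a' \<in> cs_carrier F \<Longrightarrow>
     Poly_Mapping.single (a + a', s) 1 - Poly_Mapping.single (a, s) 1 - Poly_Mapping.single (a', s) 1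
       \<in> tens_rel F \<iota>"
| rel_addr: "a \<in> cs_carrier F \<Longrightarrow>
     Poly_Mapping.single (a, s + s') 1 - Poly_Mapping.single (a, s) 1 - Poly_Mapping.single (a, s') 1
       \<in> tens_rel F \<iota>"
| rel_bal: "a \<in> cs_carrier F \<Longrightarrow>
     Poly_Mapping.single (cs_smult F r a, s) 1 - Poly_Mapping.single (a, \<iota> r * s) 1
       \<in> tens_rel F \<iota>"

definition tens_eval ::
    "('s::comm_ring_1, 't::ab_group_add, 'z) csa_scheme \<Rightarrow> ('f \<Rightarrow> 's \<Rightarrow> 't)
     \<Rightarrow> ('f \<times> 's \<Rightarrow>\<^sub>0 int) \<Rightarrow> 't" where
  "tens_eval T \<beta> x =
     (\<Sum>p\<in>Poly_Mapping.keys x. cs_smult T (of_int (Poly_Mapping.lookup x p)) (\<beta> (fst p) (snd p)))"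

definition supported_in :: "('f \<times> 's \<Rightarrow>\<^sub>0 int) \<Rightarrow> 'f set \<Rightarrow> bool" where
  "supported_in x X \<longleftrightarrow> fst ` Poly_Mapping.keys x \<subseteq> X"

text \<open>(T, beta) is the base change F \<otimes>_R S of the R-conformal superalgebra F along the
  extension iota : (R, delta_R) -> (S, delta_S): T is an S-conformal superalgebra, beta(a,s)
  plays the role of a \<otimes> s, T is exactly the quotient of the formal combinations by the
  tensor relations (so T = F \<otimes>_R S as abelian groups), S acts on the right factor, the
  grading is induced from F, and the derivation and n-products are the base-change ones.\<close>

definition is_base_change ::
    "('k::field, 'r::comm_ring_1) dring \<Rightarrow> ('k, 's::comm_ring_1) dring \<Rightarrow> ('r \<Rightarrow> 's)
     \<Rightarrow> ('r, 'f::ab_group_add, 'z1) csa_scheme \<Rightarrow> ('s, 't::ab_group_add, 'z2) csa_scheme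
     \<Rightarrow> ('f \<Rightarrow> 's \<Rightarrow> 't) \<Rightarrow> bool" where
  "is_base_change D1 D2 \<iota> F T \<beta> \<longleftrightarrow>
     dring_ext D1 D2 \<iota> \<and> conformal_superalgebra D2 T \<and>
     (\<forall>a\<in>cs_carrier F. \<forall>s. \<beta> a s \<in> cs_carrier T) \<and>
     (\<forall>a\<in>cs_carrier F. \<forall>a'\<in>cs_carrier F. \<forall>s. \<beta> (a + a') s = \<beta> a s + \<beta> a' s) \<and>
     (\<forall>a\<in>cs_carrier F. \<forall>s s'. \<beta> a (s + s') = \<beta> a s + \<beta> a s') \<and>
     (\<forall>a\<in>cs_carrier F. \<forall>r s. \<beta> (cs_smult F r a) s = \<beta> a (\<iota> r * s)) \<and>
     (\<forall>a\<in>cs_carrier F. \<forall>s s'. cs_smult T s' (\<beta> a s) = \<beta> a (s' * s)) \<and>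
     cs_carrier T = {tens_eval T \<beta> x | x. supported_in x (cs_carrier F)} \<and>
     cs_even T = {tens_eval T \<beta> x | x. supported_in x (cs_even F)} \<and>
     cs_odd T = {tens_eval T \<beta> x | x. supported_in x (cs_odd F)} \<and>
     (\<forall>x. supported_in x (cs_carrier F) \<longrightarrow> tens_eval T \<beta> x = 0 \<longrightarrow> x \<in> tens_rel F \<iota>) \<and>
     (\<forall>a\<in>cs_carrier F. \<forall>s. cs_der T (\<beta> a s) = \<beta> (cs_der F a) s + \<beta> a (dr_delta D2 s)) \<and>
     (\<forall>n N r s. \<forall>a\<in>cs_carrier F. \<forall>b\<in>cs_carrier F.
        (\<forall>j\<ge>N. cs_nprod F (n + j) a b = 0) \<longrightarrow>
        cs_nprod T n (\<beta> a r) (\<beta> b s)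
          = (\<Sum>j<N. \<beta> (cs_nprod F (n + j) a b)
                        (dr_emb D2 (inverse (of_nat (fact j))) * (dr_delta D2 ^^ j) r * s)))"

definition kring :: "('k::field, 'k) dring" where
  "kring = \<lparr>dr_emb = (\<lambda>c. c), dr_delta = (\<lambda>_. 0)\<rparr>"

text \<open>R = k[t, t^-1] is modelled as the group algebra k[Z] (finitely supported int => k),
  the key j standing for t^j; delta_t = d/dt.\<close>

definition laurent_deriv :: "(int \<Rightarrow>\<^sub>0 'k::field) \<Rightarrow> (int \<Rightarrow>\<^sub>0 'k)" where
  "laurent_deriv f = (\<Sum>j\<in>Poly_Mapping.keys f.
      Poly_Mapping.single (j - 1) (of_int j * Poly_Mapping.lookup f j))"

definition Rring :: "('k::field, int \<Rightarrow>\<^sub>0 'k) dring" where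
  "Rring = \<lparr>dr_emb = (\<lambda>c. Poly_Mapping.single 0 c), dr_delta = laurent_deriv\<rparr>"

text \<open>S_m = k[t^(1/m), t^(-1/m)] is modelled as k[Z], the key i standing for t^(i/m);
  delta_t(t^(i/m)) = (i/m) t^((i-m)/m).\<close>

definition puiseux_deriv :: "nat \<Rightarrow> (int \<Rightarrow>\<^sub>0 'k::field_char_0) \<Rightarrow> (int \<Rightarrow>\<^sub>0 'k)" where
  "puiseux_deriv m f = (\<Sum>i\<in>Poly_Mapping.keys f.
      Poly_Mapping.single (i - int m) (of_int i / of_nat m * Poly_Mapping.lookup f i))"

definition Sring :: "nat \<Rightarrow> ('k::field_char_0, int \<Rightarrow>\<^sub>0 'k) dring" where
  "Sring m = \<lparr>dr_emb = (\<lambda>c. Poly_Mapping.single 0 c), dr_delta = puiseux_deriv m\<rparr>"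

text \<open>The inclusion R -> S_m, t^j |-> t^(mj/m).\<close>

definition incl_RS :: "nat \<Rightarrow> (int \<Rightarrow>\<^sub>0 'k::field) \<Rightarrow> (int \<Rightarrow>\<^sub>0 'k)" where
  "incl_RS m f = (\<Sum>j\<in>Poly_Mapping.keys f. Poly_Mapping.single (int m * j) (Poly_Mapping.lookup f j))"

definition const_laurent :: "'k::field \<Rightarrow> (int \<Rightarrow>\<^sub>0 'k)" where
  "const_laurent c = Poly_Mapping.single 0 c"

definition eigenspace ::
    "('k::field, 'a::ab_group_add, 'z) csa_scheme \<Rightarrow> ('a \<Rightarrow> 'a) \<Rightarrow> 'k \<Rightarrow> int \<Rightarrow> 'a set" where
  "eigenspace A \<sigma> \<xi> i = {x \<in> cs_carrier A. \<sigma> x = cs_smult A (\<xi> powi i) x}"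

text \<open>Given the base change (B, beta) = A \<otimes>_k S_m, the twisted loop algebra
  L(A, sigma) = sum_i A_i \<otimes> t^(i/m) inside B, viewed as an R-conformal superalgebra
  (R acting through the inclusion R -> S_m).\<close>

definition loop_carrier ::
    "('k::field, 'a::ab_group_add, 'z1) csa_scheme \<Rightarrow> ('a \<Rightarrow> 'a) \<Rightarrow> 'k
     \<Rightarrow> ('a \<Rightarrow> (int \<Rightarrow>\<^sub>0 'k) \<Rightarrow> 'b::ab_group_add) \<Rightarrow> 'b set" where
  "loop_carrier A \<sigma> \<xi> \<beta> =
     {\<Sum>i\<in>I. \<beta> (x i) (Poly_Mapping.single i 1) | I x.
        finite I \<and> (\<forall>i\<in>I. x i \<in> eigenspace A \<sigma> \<xi> i)}"

definition loop_algebra ::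
    "nat \<Rightarrow> ('k::field, 'a::ab_group_add, 'z1) csa_scheme \<Rightarrow> ('a \<Rightarrow> 'a) \<Rightarrow> 'k
     \<Rightarrow> (int \<Rightarrow>\<^sub>0 'k, 'b::ab_group_add, 'z2) csa_scheme \<Rightarrow> ('a \<Rightarrow> (int \<Rightarrow>\<^sub>0 'k) \<Rightarrow> 'b)
     \<Rightarrow> (int \<Rightarrow>\<^sub>0 'k, 'b) csa" where
  "loop_algebra m A \<sigma> \<xi> B \<beta> =
     \<lparr>cs_carrier = loop_carrier A \<sigma> \<xi> \<beta>,
      cs_even = loop_carrier A \<sigma> \<xi> \<beta> \<inter> cs_even B,
      cs_odd = loop_carrier A \<sigma> \<xi> \<beta> \<inter> cs_odd B,
      cs_smult = (\<lambda>r x. cs_smult B (incl_RS m r) x),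
      cs_der = cs_der B,
      cs_nprod = cs_nprod B\<rparr>"

end

theory Submission
  imports Defs
begin


definition evf :: "('f \<Rightarrow> 's::comm_ring_1 \<Rightarrow> 'u::ab_group_add) \<Rightarrow> 'f set \<Rightarrow> ('f \<times> 's \<Rightarrow>\<^sub>0 int) \<Rightarrow> 'u" where
  "evf f C x = (\<Sum>p\<in>Poly_Mapping.keys x.
      if fst p \<in> C then f (fst p) (of_int (Poly_Mapping.lookup x p) * snd p) else 0)"

definition add2 :: "('f \<Rightarrow> 's::comm_ring_1 \<Rightarrow> 'u::ab_group_add) \<Rightarrow> 'f set \<Rightarrow> bool" where
  "add2 f C \<longleftrightarrow> (\<forall>a\<in>C. \<forall>s s'. f a (s + s') = f a s + f a s')"

lemma add2_zero: "add2 f C \<Longrightarrow> a \<in> C \<Longrightarrow> f a 0 = 0"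
  unfolding add2_def by (metis add_0 add_cancel_right_right)

lemma evf_superset:
  assumes "add2 f C" "finite K" "Poly_Mapping.keys x \<subseteq> K"
  shows "evf f C x = (\<Sum>p\<in>K. if fst p \<in> C then f (fst p) (of_int (Poly_Mapping.lookup x p) * snd p) else 0)"
  unfolding evf_def
  apply (rule sum.mono_neutral_left)
  using assms by (auto simp: in_keys_iff add2_zero)

lemma evf_add:
  assumes "add2 f C"
  shows "evf f C (x + y) = evf f C x + evf f C y"
proof -
  let ?K = "Poly_Mapping.keys x \<union> Poly_Mapping.keys y"
  have "evf f C (x + y) = (\<Sum>p\<in>?K. if fst p \<in> C then f (fst p) (of_int (Poly_Mapping.lookup (x+y) p) * snd p) else 0)"
    by (rule evf_superset[OF assms]) (use keys_add[of x y] in auto)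
  also have "\<dots> = (\<Sum>p\<in>?K. (if fst p \<in> C then f (fst p) (of_int (Poly_Mapping.lookup x p) * snd p) else 0)
        + (if fst p \<in> C then f (fst p) (of_int (Poly_Mapping.lookup y p) * snd p) else 0))"
    apply (rule sum.cong, simp)
    using assms unfolding add2_def by (auto simp: lookup_add distrib_right)
  also have "\<dots> = evf f C x + evf f C y"
    by (simp add: sum.distrib evf_superset[OF assms, of ?K x] evf_superset[OF assms, of ?K y])
  finally show ?thesis .
qed

lemma evf_zero: "evf f C 0 = 0"
  by (simp add: evf_def)

lemma evf_uminus:
  assumes "add2 f C"
  shows "evf f C (- x) = - evf f C x"
  using evf_add[OF assms, of x "-x"] by (simp add: evf_zero eq_neg_iff_add_eq_0 add.commute)

lemma evf_diff:
  assumes "add2 f C"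
  shows "evf f C (x - y) = evf f C x - evf f C y"
  using evf_add[OF assms, of x "-y"] evf_uminus[OF assms, of y] by simp

lemma evf_single:
  "evf f C (Poly_Mapping.single (a, s) 1) = (if a \<in> C then f a s else 0)"
  by (simp add: evf_def)

lemma evf_sum:
  assumes "add2 f C"
  shows "evf f C (\<Sum>i\<in>I. g i) = (\<Sum>i\<in>I. evf f C (g i))"
  by (induction I rule: infinite_finite_induct) (auto simp: evf_zero evf_add[OF assms])



lemma diff_kring_facts:
  assumes "diff_kring D"
  shows "dr_emb D 0 = 0" "dr_emb D 1 = 1" "dr_emb D (x + y) = dr_emb D x + dr_emb D y"
    "dr_emb D (x * y) = dr_emb D x * dr_emb D y"
    "dr_delta D (r + s) = dr_delta D r + dr_delta D s"
    "dr_delta D (r * s) = r * dr_delta D s + dr_delta D r * s"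
    "dr_delta D (dr_emb D c * r) = dr_emb D c * dr_delta D r"
  using assms unfolding diff_kring_def by auto

lemma diff_kring_delta1:
  assumes "diff_kring D" shows "dr_delta D 1 = 0"
  using diff_kring_facts(6)[OF assms, of 1 1] by simp

lemma diff_kring_deltapow1:
  assumes "diff_kring D" "j > 0" shows "(dr_delta D ^^ j) 1 = 0"
proof -
  have d0: "dr_delta D 0 = 0" using diff_kring_facts(5)[OF assms(1), of 0 0] by simp
  have "(dr_delta D ^^ Suc i) 1 = 0" for i
    by (induction i) (auto simp: diff_kring_delta1[OF assms(1)] d0)
  then show ?thesis using assms(2) by (metis gr0_implies_Suc)
qed

locale csa =
  fixes D :: "('k::field, 'r::comm_ring_1) dring" and A :: "('r, 'a::ab_group_add, 'z) csa_scheme"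
  assumes csa: "conformal_superalgebra D A"
begin

lemma dk: "diff_kring D" using csa unfolding conformal_superalgebra_def by auto
lemma gm: "graded_module A" using csa unfolding conformal_superalgebra_def by auto

abbreviation "car \<equiv> cs_carrier A"
abbreviation "sm \<equiv> cs_smult A"
abbreviation "der \<equiv> cs_der A"
abbreviation "np \<equiv> cs_nprod A"

lemma gmc1: "subgroup_of car"
  using gm unfolding graded_module_def by (elim conjE) assumption
lemma gmc2: "subgroup_of (cs_even A)"
  using gm unfolding graded_module_def by (elim conjE) assumption
lemma gmc3: "subgroup_of (cs_odd A)"
  using gm unfolding graded_module_def by (elim conjE) assumption
lemma gmc4: "cs_even A \<subseteq> car"
  using gm unfolding graded_module_def by (elim conjE) assumption
lemma gmc5: "cs_odd A \<subseteq> car"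
  using gm unfolding graded_module_def by (elim conjE) assumption
lemma gmc6: "car = {x + y | x y. x \<in> cs_even A \<and> y \<in> cs_odd A}"
  using gm unfolding graded_module_def by (elim conjE) assumption
lemma gmc7: "cs_even A \<inter> cs_odd A = {0}"
  using gm unfolding graded_module_def by (elim conjE) assumption
lemma gmc8: "\<forall>r. \<forall>x\<in>car. sm r x \<in> car"
  using gm unfolding graded_module_def by (elim conjE) assumption
lemma gmc9: "\<forall>r. \<forall>x\<in>cs_even A. sm r x \<in> cs_even A"
  using gm unfolding graded_module_def by (elim conjE) assumption
lemma gmc10: "\<forall>r. \<forall>x\<in>cs_odd A. sm r x \<in> cs_odd A"
  using gm unfolding graded_module_def by (elim conjE) assumption
lemma gmc11: "\<forall>r. \<forall>x\<in>car. \<forall>y\<in>car. sm r (x + y) = sm r x + sm r y"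
  using gm unfolding graded_module_def by (elim conjE) assumption
lemma gmc12: "\<forall>r s. \<forall>x\<in>car. sm (r + s) x = sm r x + sm s x"
  using gm unfolding graded_module_def by (elim conjE) assumption
lemma gmc13: "\<forall>r s. \<forall>x\<in>car. sm (r * s) x = sm r (sm s x)"
  using gm unfolding graded_module_def by (elim conjE) assumption
lemma gmc14: "\<forall>x\<in>car. sm 1 x = x"
  using gm unfolding graded_module_def by (elim conjE) assumption
lemmas gmc = gmc1 gmc2 gmc3 gmc4 gmc5 gmc6 gmc7 gmc8 gmc9 gmc10 gmc11 gmc12 gmc13 gmc14

lemma zero_car: "0 \<in> car" and add_car: "x \<in> car \<Longrightarrow> y \<in> car \<Longrightarrow> x + y \<in> car"
  and neg_car: "x \<in> car \<Longrightarrow> - x \<in> car"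
  using gmc(1) unfolding subgroup_of_def by auto
lemma diff_car: "x \<in> car \<Longrightarrow> y \<in> car \<Longrightarrow> x - y \<in> car"
  using add_car[of x "-y"] neg_car[of y] by simp
lemma sum_car: "(\<And>i. i \<in> I \<Longrightarrow> g i \<in> car) \<Longrightarrow> sum g I \<in> car"
  by (induction I rule: infinite_finite_induct) (auto simp: zero_car add_car)

lemma zero_even: "0 \<in> cs_even A" and add_even: "x \<in> cs_even A \<Longrightarrow> y \<in> cs_even A \<Longrightarrow> x + y \<in> cs_even A"
  and neg_even: "x \<in> cs_even A \<Longrightarrow> - x \<in> cs_even A"
  using gmc(2) unfolding subgroup_of_def by auto
lemma zero_odd: "0 \<in> cs_odd A" and add_odd: "x \<in> cs_odd A \<Longrightarrow> y \<in> cs_odd A \<Longrightarrow> x + y \<in> cs_odd A"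
  and neg_odd: "x \<in> cs_odd A \<Longrightarrow> - x \<in> cs_odd A"
  using gmc(3) unfolding subgroup_of_def by auto
lemma even_car: "cs_even A \<subseteq> car" and odd_car: "cs_odd A \<subseteq> car"
  and car_split: "car = {x + y | x y. x \<in> cs_even A \<and> y \<in> cs_odd A}"
  and even_odd: "cs_even A \<inter> cs_odd A = {0}"
  using gmc by auto
lemma sum_even: "(\<And>i. i \<in> I \<Longrightarrow> g i \<in> cs_even A) \<Longrightarrow> sum g I \<in> cs_even A"
  by (induction I rule: infinite_finite_induct) (auto simp: zero_even add_even)
lemma sum_odd: "(\<And>i. i \<in> I \<Longrightarrow> g i \<in> cs_odd A) \<Longrightarrow> sum g I \<in> cs_odd A"
  by (induction I rule: infinite_finite_induct) (auto simp: zero_odd add_odd)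

lemma sm_car: "x \<in> car \<Longrightarrow> sm r x \<in> car"
  and sm_even: "x \<in> cs_even A \<Longrightarrow> sm r x \<in> cs_even A"
  and sm_odd: "x \<in> cs_odd A \<Longrightarrow> sm r x \<in> cs_odd A"
  and sm_add: "x \<in> car \<Longrightarrow> y \<in> car \<Longrightarrow> sm r (x + y) = sm r x + sm r y"
  and sm_radd: "x \<in> car \<Longrightarrow> sm (r + s) x = sm r x + sm s x"
  and sm_mult: "x \<in> car \<Longrightarrow> sm (r * s) x = sm r (sm s x)"
  and sm_one: "x \<in> car \<Longrightarrow> sm 1 x = x"
  using gmc(8-14) by auto

lemma sm_zero: "sm r 0 = 0"
  using sm_add[OF zero_car zero_car, of r] by simp
lemma sm_rzero: "x \<in> car \<Longrightarrow> sm 0 x = 0"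
  using sm_radd[of x 0 0] by simp
lemma sm_sum: "(\<And>i. i \<in> I \<Longrightarrow> g i \<in> car) \<Longrightarrow> sm r (sum g I) = (\<Sum>i\<in>I. sm r (g i))"
  by (induction I rule: infinite_finite_induct) (auto simp: sm_zero sm_add sum_car)
lemma sm_rsum: "x \<in> car \<Longrightarrow> sm (sum g I) x = (\<Sum>i\<in>I. sm (g i) x)"
  by (induction I rule: infinite_finite_induct) (auto simp: sm_rzero sm_radd)
lemma sm_comm: "x \<in> car \<Longrightarrow> sm r (sm s x) = sm s (sm r x)"
  by (metis mult.commute sm_mult)

lemma der_car: "x \<in> car \<Longrightarrow> der x \<in> car"
  and der_even: "x \<in> cs_even A \<Longrightarrow> der x \<in> cs_even A"
  and der_odd: "x \<in> cs_odd A \<Longrightarrow> der x \<in> cs_odd A"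
  using csa unfolding conformal_superalgebra_def by auto

lemma der_emb: "a \<in> car \<Longrightarrow> b \<in> car \<Longrightarrow> der (sm (dr_emb D c) a + b) = sm (dr_emb D c) (der a) + der b"
  using csa unfolding conformal_superalgebra_def by auto

lemma der_add: "a \<in> car \<Longrightarrow> b \<in> car \<Longrightarrow> der (a + b) = der a + der b"
  using der_emb[of a b 1] by (simp add: diff_kring_facts(2)[OF dk] sm_one der_car)
lemma der_zero: "der 0 = 0"
  using der_add[OF zero_car zero_car] by simp
lemma der_sum: "(\<And>i. i \<in> I \<Longrightarrow> g i \<in> car) \<Longrightarrow> der (sum g I) = (\<Sum>i\<in>I. der (g i))"
  by (induction I rule: infinite_finite_induct) (auto simp: der_zero der_add sum_car)
lemma der_sm: "a \<in> car \<Longrightarrow> der (sm r a) = sm r (der a) + sm (dr_delta D r) a"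
  using csa unfolding conformal_superalgebra_def by auto
lemma der_sm_emb: "a \<in> car \<Longrightarrow> der (sm (dr_emb D c) a) = sm (dr_emb D c) (der a)"
  using der_emb[of a 0 c] by (simp add: zero_car der_zero)

lemma np_car: "a \<in> car \<Longrightarrow> b \<in> car \<Longrightarrow> np n a b \<in> car"
  using csa unfolding conformal_superalgebra_def by auto
lemma np_emb1: "a \<in> car \<Longrightarrow> a' \<in> car \<Longrightarrow> b \<in> car \<Longrightarrow>
   np n (sm (dr_emb D c) a + a') b = sm (dr_emb D c) (np n a b) + np n a' b"
  using csa unfolding conformal_superalgebra_def by auto
lemma np_emb2: "a \<in> car \<Longrightarrow> b \<in> car \<Longrightarrow> b' \<in> car \<Longrightarrow>
   np n a (sm (dr_emb D c) b + b') = sm (dr_emb D c) (np n a b) + np n a b'"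
  using csa unfolding conformal_superalgebra_def by auto
lemma np_add1: "a \<in> car \<Longrightarrow> a' \<in> car \<Longrightarrow> b \<in> car \<Longrightarrow> np n (a + a') b = np n a b + np n a' b"
  using np_emb1[of a a' b n 1] by (simp add: diff_kring_facts(2)[OF dk] sm_one np_car)
lemma np_add2: "a \<in> car \<Longrightarrow> b \<in> car \<Longrightarrow> b' \<in> car \<Longrightarrow> np n a (b + b') = np n a b + np n a b'"
  using np_emb2[of a b b' n 1] by (simp add: diff_kring_facts(2)[OF dk] sm_one np_car)
lemma np_zero1: "b \<in> car \<Longrightarrow> np n 0 b = 0"
  using np_add1[OF zero_car zero_car, of b n] by simp
lemma np_zero2: "a \<in> car \<Longrightarrow> np n a 0 = 0"
  using np_add2[OF _ zero_car zero_car, of a n] by simp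
lemma np_sum1: "(\<And>i. i \<in> I \<Longrightarrow> g i \<in> car) \<Longrightarrow> b \<in> car \<Longrightarrow> np n (sum g I) b = (\<Sum>i\<in>I. np n (g i) b)"
  by (induction I rule: infinite_finite_induct) (auto simp: np_zero1 np_add1 sum_car)
lemma np_sum2: "(\<And>i. i \<in> I \<Longrightarrow> g i \<in> car) \<Longrightarrow> a \<in> car \<Longrightarrow> np n a (sum g I) = (\<Sum>i\<in>I. np n a (g i))"
  by (induction I rule: infinite_finite_induct) (auto simp: np_zero2 np_add2 sum_car)
lemma np_emb1': "a \<in> car \<Longrightarrow> b \<in> car \<Longrightarrow> np n (sm (dr_emb D c) a) b = sm (dr_emb D c) (np n a b)"
  using np_emb1[OF _ zero_car, of a b n c] by (simp add: np_zero1)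
lemma np_vanish: "a \<in> car \<Longrightarrow> b \<in> car \<Longrightarrow> \<exists>N. \<forall>n\<ge>N. np n a b = 0"
  using csa unfolding conformal_superalgebra_def by auto
lemma np_sm2: "a \<in> car \<Longrightarrow> b \<in> car \<Longrightarrow> np n a (sm r b) = sm r (np n a b)"
  using csa unfolding conformal_superalgebra_def by auto
lemma np_sm1: "a \<in> car \<Longrightarrow> b \<in> car \<Longrightarrow> (\<forall>j\<ge>N. np (n + j) a b = 0) \<Longrightarrow>
   np n (sm r a) b = (\<Sum>j<N. sm (dr_emb D (inverse (of_nat (fact j))) * (dr_delta D ^^ j) r) (np (n + j) a b))"
  using csa unfolding conformal_superalgebra_def by auto

end



definition lift :: "('s::comm_ring_1, 't::ab_group_add, 'z) csa_scheme \<Rightarrow> ('f \<Rightarrow> 's \<Rightarrow> 't)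
   \<Rightarrow> 'f set \<Rightarrow> ('f \<Rightarrow> 's \<Rightarrow> 'u::ab_group_add) \<Rightarrow> 't \<Rightarrow> 'u" where
  "lift T \<beta> C f y = evf f C (SOME x. supported_in x C \<and> tens_eval T \<beta> x = y)"

definition fgood :: "('r::comm_ring_1, 'f::ab_group_add, 'z) csa_scheme \<Rightarrow> ('r \<Rightarrow> 's::comm_ring_1)
   \<Rightarrow> ('f \<Rightarrow> 's \<Rightarrow> 'u::ab_group_add) \<Rightarrow> bool" where
  "fgood F \<iota> f \<longleftrightarrow> add2 f (cs_carrier F) \<and>
     (\<forall>a\<in>cs_carrier F. \<forall>a'\<in>cs_carrier F. \<forall>s. f (a + a') s = f a s + f a' s) \<and>
     (\<forall>a\<in>cs_carrier F. \<forall>r s. f (cs_smult F r a) s = f a (\<iota> r * s))"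

definition fclosed :: "('r::comm_ring_1, 'f::ab_group_add, 'z) csa_scheme \<Rightarrow> bool" where
  "fclosed F \<longleftrightarrow> 0 \<in> cs_carrier F \<and> (\<forall>a\<in>cs_carrier F. \<forall>a'\<in>cs_carrier F. a + a' \<in> cs_carrier F) \<and>
     (\<forall>a\<in>cs_carrier F. \<forall>r. cs_smult F r a \<in> cs_carrier F)"

lemma supported_add: "supported_in x C \<Longrightarrow> supported_in y C \<Longrightarrow> supported_in (x + y) C"
  unfolding supported_in_def using keys_add[of x y] by blast
lemma supported_diff: "supported_in x C \<Longrightarrow> supported_in y C \<Longrightarrow> supported_in (x - y) C"
  unfolding supported_in_def using keys_diff[of x y] by blast
lemma supported_single: "a \<in> C \<Longrightarrow> supported_in (Poly_Mapping.single (a, s) c) C"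
  unfolding supported_in_def by auto
lemma supported_zero: "supported_in 0 C"
  unfolding supported_in_def by auto
lemma supported_sum: "(\<And>i. i \<in> I \<Longrightarrow> supported_in (g i) C) \<Longrightarrow> supported_in (sum g I) C"
  by (induction I rule: infinite_finite_induct) (auto simp: supported_zero supported_add)

lemma evf_rel:
  assumes "z \<in> tens_rel F \<iota>" "fgood F \<iota> f" "fclosed F"
  shows "evf f (cs_carrier F) z = 0"
  using assms(1)
proof (induction rule: tens_rel.induct)
  case rel_zero then show ?case by (simp add: evf_zero)
next
  case (rel_add x y) then show ?case using assms(2) unfolding fgood_def by (simp add: evf_add)
next
  case (rel_neg x) then show ?case using assms(2) unfolding fgood_def by (simp add: evf_uminus)
next
  case (rel_addl a a' s)
  have a2: "add2 f (cs_carrier F)" using assms(2) unfolding fgood_def by auto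
  have "a + a' \<in> cs_carrier F" using rel_addl assms(3) unfolding fclosed_def by auto
  then show ?case using rel_addl assms(2) unfolding fgood_def
    by (simp add: evf_diff[OF a2] evf_single)
next
  case (rel_addr a s s')
  have a2: "add2 f (cs_carrier F)" using assms(2) unfolding fgood_def by auto
  then show ?case using rel_addr unfolding add2_def
    by (simp add: evf_diff[OF a2] evf_single)
next
  case (rel_bal a r s)
  have a2: "add2 f (cs_carrier F)" using assms(2) unfolding fgood_def by auto
  have "cs_smult F r a \<in> cs_carrier F" using rel_bal assms(3) unfolding fclosed_def by auto
  then show ?case using rel_bal assms(2) unfolding fgood_def
    by (simp add: evf_diff[OF a2] evf_single)
qed

locale bc =
  fixes D1 :: "('k::field, 'r::comm_ring_1) dring" and D2 :: "('k, 's::comm_ring_1) dring"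
    and \<iota> :: "'r \<Rightarrow> 's" and F :: "('r, 'f::ab_group_add, 'z1) csa_scheme"
    and T :: "('s, 't::ab_group_add, 'z2) csa_scheme" and \<beta> :: "'f \<Rightarrow> 's \<Rightarrow> 't"
  assumes bc: "is_base_change D1 D2 \<iota> F T \<beta>"
begin

lemma T_csa: "conformal_superalgebra D2 T" using bc unfolding is_base_change_def by auto
sublocale T: csa D2 T by (rule csa.intro, rule T_csa)

lemma ext: "dring_ext D1 D2 \<iota>" using bc unfolding is_base_change_def by auto

lemma b_car: "a \<in> cs_carrier F \<Longrightarrow> \<beta> a s \<in> cs_carrier T"
  and b_add1: "a \<in> cs_carrier F \<Longrightarrow> a' \<in> cs_carrier F \<Longrightarrow> \<beta> (a + a') s = \<beta> a s + \<beta> a' s"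
  and b_add2: "a \<in> cs_carrier F \<Longrightarrow> \<beta> a (s + s') = \<beta> a s + \<beta> a s'"
  and b_bal: "a \<in> cs_carrier F \<Longrightarrow> \<beta> (cs_smult F r a) s = \<beta> a (\<iota> r * s)"
  and b_sm: "a \<in> cs_carrier F \<Longrightarrow> cs_smult T s' (\<beta> a s) = \<beta> a (s' * s)"
  and b_der: "a \<in> cs_carrier F \<Longrightarrow> cs_der T (\<beta> a s) = \<beta> (cs_der F a) s + \<beta> a (dr_delta D2 s)"
  and b_np: "a \<in> cs_carrier F \<Longrightarrow> b \<in> cs_carrier F \<Longrightarrow> (\<forall>j\<ge>N. cs_nprod F (n + j) a b = 0) \<Longrightarrow>
        cs_nprod T n (\<beta> a u) (\<beta> b s)
          = (\<Sum>j<N. \<beta> (cs_nprod F (n + j) a b)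
                        (dr_emb D2 (inverse (of_nat (fact j))) * (dr_delta D2 ^^ j) u * s))"
  using bc unfolding is_base_change_def by auto

lemma T_car: "cs_carrier T = {tens_eval T \<beta> x | x. supported_in x (cs_carrier F)}"
  and T_even: "cs_even T = {tens_eval T \<beta> x | x. supported_in x (cs_even F)}"
  and T_odd: "cs_odd T = {tens_eval T \<beta> x | x. supported_in x (cs_odd F)}"
  and b_inj: "supported_in x (cs_carrier F) \<Longrightarrow> tens_eval T \<beta> x = 0 \<Longrightarrow> x \<in> tens_rel F \<iota>"
  using bc unfolding is_base_change_def by auto

lemma add2_b: "add2 \<beta> (cs_carrier F)" unfolding add2_def by (simp add: b_add2)
lemma b_zero2: "a \<in> cs_carrier F \<Longrightarrow> \<beta> a 0 = 0" by (rule add2_zero[OF add2_b])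

lemma tens_eval_evf:
  assumes "supported_in x X" "X \<subseteq> cs_carrier F"
  shows "tens_eval T \<beta> x = evf \<beta> (cs_carrier F) x"
  unfolding tens_eval_def evf_def
  apply (rule sum.cong, simp)
  using assms unfolding supported_in_def by (auto simp: b_sm)

lemma rep:
  assumes "y \<in> {tens_eval T \<beta> x | x. supported_in x X}" "X \<subseteq> cs_carrier F"
  shows "\<exists>(I::('f\<times>'s) set) a s. finite I \<and> (\<forall>i\<in>I. a i \<in> X) \<and> y = (\<Sum>i\<in>I. \<beta> (a i) (s i))"
proof -
  obtain x where x: "supported_in x X" "y = tens_eval T \<beta> x" using assms(1) by auto
  have "y = (\<Sum>p\<in>Poly_Mapping.keys x. \<beta> (fst p) (of_int (Poly_Mapping.lookup x p) * snd p))"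
    unfolding x(2) tens_eval_evf[OF x(1) assms(2)] evf_def
    apply (rule sum.cong, simp) using x(1) assms(2) unfolding supported_in_def by auto
  moreover have "finite (Poly_Mapping.keys x)" "\<forall>p\<in>Poly_Mapping.keys x. fst p \<in> X"
    using x(1) unfolding supported_in_def by auto
  ultimately show ?thesis
    apply -
    apply (rule exI[where x="Poly_Mapping.keys x"])
    apply (rule exI[where x="fst"])
    apply (rule exI[where x="\<lambda>p. of_int (Poly_Mapping.lookup x p) * snd p"])
    by simp
qed

lemma rep_car: "y \<in> cs_carrier T \<Longrightarrow>
   \<exists>(I::('f\<times>'s) set) a s. finite I \<and> (\<forall>i\<in>I. a i \<in> cs_carrier F) \<and> y = (\<Sum>i\<in>I. \<beta> (a i) (s i))"
  using rep[of y "cs_carrier F"] T_car by auto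

lemma sum_b_car: "(\<And>i. i \<in> I \<Longrightarrow> a i \<in> cs_carrier F) \<Longrightarrow> (\<Sum>i\<in>I. \<beta> (a i) (s i)) \<in> cs_carrier T"
  by (rule T.sum_car) (simp add: b_car)

lemma b_X:
  assumes "a \<in> X" "X \<subseteq> cs_carrier F"
  shows "\<beta> a s \<in> {tens_eval T \<beta> x | x. supported_in x X}"
proof -
  have "tens_eval T \<beta> (Poly_Mapping.single (a, s) 1) = \<beta> a s"
    using tens_eval_evf[OF supported_single[OF assms(1)] assms(2)] assms by (auto simp: evf_single)
  then show ?thesis
    apply (intro CollectI exI[where x="Poly_Mapping.single (a, s) 1"])
    using supported_single[OF assms(1), of s 1] by simp
qed

lemma b_even: "a \<in> cs_even F \<Longrightarrow> cs_even F \<subseteq> cs_carrier F \<Longrightarrow> \<beta> a s \<in> cs_even T"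
  using b_X[of a "cs_even F" s] T_even by simp
lemma b_odd: "a \<in> cs_odd F \<Longrightarrow> cs_odd F \<subseteq> cs_carrier F \<Longrightarrow> \<beta> a s \<in> cs_odd T"
  using b_X[of a "cs_odd F" s] T_odd by simp

lemma b_sum2: "a \<in> cs_carrier F \<Longrightarrow> \<beta> a (sum g I) = (\<Sum>i\<in>I. \<beta> a (g i))"
  by (induction I rule: infinite_finite_induct) (auto simp: b_zero2 b_add2)

context
  assumes fc: "fclosed F"
begin

lemma F0: "0 \<in> cs_carrier F" and Fadd: "a \<in> cs_carrier F \<Longrightarrow> a' \<in> cs_carrier F \<Longrightarrow> a + a' \<in> cs_carrier F"
  and Fsm: "a \<in> cs_carrier F \<Longrightarrow> cs_smult F r a \<in> cs_carrier F"
  using fc unfolding fclosed_def by auto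

lemma Fsum: "(\<And>i. i \<in> I \<Longrightarrow> g i \<in> cs_carrier F) \<Longrightarrow> sum g I \<in> cs_carrier F"
  by (induction I rule: infinite_finite_induct) (auto simp: F0 Fadd)

lemma b_zero1: "\<beta> 0 s = 0"
  using b_add1[OF F0 F0, of s] by simp

lemma b_sum1: "(\<And>i. i \<in> I \<Longrightarrow> g i \<in> cs_carrier F) \<Longrightarrow> \<beta> (sum g I) s = (\<Sum>i\<in>I. \<beta> (g i) s)"
  by (induction I rule: infinite_finite_induct) (auto simp: b_zero1 b_add1 Fsum)

lemma fgood_b: "fgood F \<iota> \<beta>"
  unfolding fgood_def by (simp add: add2_b b_add1 b_bal)

lemma wd:
  assumes "fgood F \<iota> f" "supported_in x (cs_carrier F)" "supported_in y (cs_carrier F)"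
    "tens_eval T \<beta> x = tens_eval T \<beta> y"
  shows "evf f (cs_carrier F) x = evf f (cs_carrier F) y"
proof -
  have a2: "add2 f (cs_carrier F)" using assms(1) unfolding fgood_def by auto
  have "tens_eval T \<beta> (x - y) = 0"
    using assms(2-4) tens_eval_evf[OF _ order_refl] supported_diff[OF assms(2,3)]
    by (simp add: evf_diff[OF add2_b])
  then have "x - y \<in> tens_rel F \<iota>" using b_inj supported_diff assms(2,3) by blast
  then have "evf f (cs_carrier F) (x - y) = 0" using evf_rel assms(1) fc by blast
  then show ?thesis by (simp add: evf_diff[OF a2])
qed

lemma lift_eval:
  assumes "fgood F \<iota> f" "supported_in x (cs_carrier F)"
  shows "lift T \<beta> (cs_carrier F) f (tens_eval T \<beta> x) = evf f (cs_carrier F) x"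
proof -
  let ?P = "\<lambda>x'. supported_in x' (cs_carrier F) \<and> tens_eval T \<beta> x' = tens_eval T \<beta> x"
  have "?P (SOME x'. ?P x')" by (rule someI[of ?P x]) (simp add: assms)
  then show ?thesis unfolding lift_def using wd[OF assms(1) _ assms(2)] by blast
qed

lemma lift_sum:
  assumes "fgood F \<iota> f" "finite I" "\<And>i. i \<in> I \<Longrightarrow> a i \<in> cs_carrier F"
  shows "lift T \<beta> (cs_carrier F) f (\<Sum>i\<in>I. \<beta> (a i) (s i)) = (\<Sum>i\<in>I. f (a i) (s i))"
proof -
  let ?x = "\<Sum>i\<in>I. Poly_Mapping.single (a i, s i) (1::int)"
  have a2: "add2 f (cs_carrier F)" using assms(1) unfolding fgood_def by auto
  have sx: "supported_in ?x (cs_carrier F)" by (rule supported_sum) (simp add: supported_single assms(3))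
  have "tens_eval T \<beta> ?x = (\<Sum>i\<in>I. \<beta> (a i) (s i))"
    using sx tens_eval_evf[OF sx order_refl] by (simp add: evf_sum[OF add2_b] evf_single assms(3))
  moreover have "evf f (cs_carrier F) ?x = (\<Sum>i\<in>I. f (a i) (s i))"
    by (simp add: evf_sum[OF a2] evf_single assms(3))
  ultimately show ?thesis using lift_eval[OF assms(1) sx] by simp
qed

lemma lift_single:
  assumes "fgood F \<iota> f" "a \<in> cs_carrier F"
  shows "lift T \<beta> (cs_carrier F) f (\<beta> a s) = f a s"
  using lift_sum[OF assms(1), of "{()}" "\<lambda>_. a" "\<lambda>_. s"] assms(2) by simp

lemma lift_add:
  assumes "fgood F \<iota> f" "y \<in> cs_carrier T" "y' \<in> cs_carrier T"
  shows "lift T \<beta> (cs_carrier F) f (y + y') = lift T \<beta> (cs_carrier F) f y + lift T \<beta> (cs_carrier F) f y'"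
proof -
  have a2: "add2 f (cs_carrier F)" using assms(1) unfolding fgood_def by auto
  obtain x x' where x: "supported_in x (cs_carrier F)" "y = tens_eval T \<beta> x"
    and x': "supported_in x' (cs_carrier F)" "y' = tens_eval T \<beta> x'"
    using assms(2,3) T_car by auto
  have "y + y' = tens_eval T \<beta> (x + x')"
    using x x' tens_eval_evf[OF _ order_refl] supported_add[OF x(1) x'(1)]
    by (simp add: evf_add[OF add2_b])
  then show ?thesis using x x' supported_add[OF x(1) x'(1)]
    by (simp add: lift_eval[OF assms(1)] evf_add[OF a2])
qed

lemma lift_zero:
  assumes "fgood F \<iota> f"
  shows "lift T \<beta> (cs_carrier F) f 0 = 0"
  using lift_add[OF assms T.zero_car T.zero_car] by simp

lemma lift_sumT:
  assumes "fgood F \<iota> f" "\<And>i. i \<in> I \<Longrightarrow> g i \<in> cs_carrier T"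
  shows "lift T \<beta> (cs_carrier F) f (sum g I) = (\<Sum>i\<in>I. lift T \<beta> (cs_carrier F) f (g i))"
  using assms(2)
  by (induction I rule: infinite_finite_induct) (auto simp: lift_zero[OF assms(1)] lift_add[OF assms(1)] T.sum_car)

end
end



locale bchom = bc D1 D2 \<iota> F T \<beta>
  for D1 :: "('k::field, 'r::comm_ring_1) dring" and D2 :: "('k, 's::comm_ring_1) dring"
    and \<iota> :: "'r \<Rightarrow> 's" and F :: "('r, 'f::ab_group_add, 'z1) csa_scheme"
    and T :: "('s, 't::ab_group_add, 'z2) csa_scheme" and \<beta> :: "'f \<Rightarrow> 's \<Rightarrow> 't" +
  fixes D3 :: "('k, 's3::comm_ring_1) dring" and T' :: "('s3, 'u::ab_group_add, 'z3) csa_scheme"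
    and \<kappa> :: "'s \<Rightarrow> 's3" and g :: "'f \<Rightarrow> 'u"
  assumes T'_csa: "conformal_superalgebra D3 T'"
    and fc: "fclosed F"
    and Fder: "\<And>a. a \<in> cs_carrier F \<Longrightarrow> cs_der F a \<in> cs_carrier F"
    and Fnp: "\<And>a b n. a \<in> cs_carrier F \<Longrightarrow> b \<in> cs_carrier F \<Longrightarrow> cs_nprod F n a b \<in> cs_carrier F"
    and Fvan: "\<And>a b. a \<in> cs_carrier F \<Longrightarrow> b \<in> cs_carrier F \<Longrightarrow> \<exists>N. \<forall>n\<ge>N. cs_nprod F n a b = 0"
    and Fev: "cs_even F \<subseteq> cs_carrier F" and Fod: "cs_odd F \<subseteq> cs_carrier F"
    and k_add: "\<And>x y. \<kappa> (x + y) = \<kappa> x + \<kappa> y"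
    and k_mult: "\<And>x y. \<kappa> (x * y) = \<kappa> x * \<kappa> y"
    and k_emb: "\<And>c. \<kappa> (dr_emb D2 c) = dr_emb D3 c"
    and k_delta: "\<And>r. \<kappa> (dr_delta D2 r) = dr_delta D3 (\<kappa> r)"
    and g_car: "\<And>a. a \<in> cs_carrier F \<Longrightarrow> g a \<in> cs_carrier T'"
    and g_even: "\<And>a. a \<in> cs_even F \<Longrightarrow> g a \<in> cs_even T'"
    and g_odd: "\<And>a. a \<in> cs_odd F \<Longrightarrow> g a \<in> cs_odd T'"
    and g_add: "\<And>a a'. a \<in> cs_carrier F \<Longrightarrow> a' \<in> cs_carrier F \<Longrightarrow> g (a + a') = g a + g a'"
    and g_sm: "\<And>a r. a \<in> cs_carrier F \<Longrightarrow> g (cs_smult F r a) = cs_smult T' (\<kappa> (\<iota> r)) (g a)"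
    and g_der: "\<And>a. a \<in> cs_carrier F \<Longrightarrow> g (cs_der F a) = cs_der T' (g a)"
    and g_np: "\<And>a b n. a \<in> cs_carrier F \<Longrightarrow> b \<in> cs_carrier F \<Longrightarrow>
        g (cs_nprod F n a b) = cs_nprod T' n (g a) (g b)"
begin

sublocale T': csa D3 T' by (rule csa.intro, rule T'_csa)

definition ff :: "'f \<Rightarrow> 's \<Rightarrow> 'u" where "ff a s = cs_smult T' (\<kappa> s) (g a)"
definition Phi :: "'t \<Rightarrow> 'u" where "Phi = lift T \<beta> (cs_carrier F) ff"

lemma g_zero: "g 0 = 0"
  using g_add[OF F0[OF fc] F0[OF fc]] by simp

lemma fgood_ff: "fgood F \<iota> ff"
  unfolding fgood_def add2_def ff_def
  by (auto simp: k_add T'.sm_radd g_car g_add T'.sm_add g_sm Fsm[OF fc] k_mult T'.sm_mult[symmetric] mult.commute)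

lemma Phi_b: "a \<in> cs_carrier F \<Longrightarrow> Phi (\<beta> a s) = cs_smult T' (\<kappa> s) (g a)"
  unfolding Phi_def using lift_single[OF fc fgood_ff] by (simp add: ff_def)

lemma Phi_sum: assumes "finite I" "\<And>i. i \<in> I \<Longrightarrow> a i \<in> cs_carrier F"
  shows "Phi (\<Sum>i\<in>I. \<beta> (a i) (s i)) = (\<Sum>i\<in>I. cs_smult T' (\<kappa> (s i)) (g (a i)))"
  unfolding Phi_def using lift_sum[OF fc fgood_ff assms] by (simp add: ff_def)

lemma Phi_add: "y \<in> cs_carrier T \<Longrightarrow> y' \<in> cs_carrier T \<Longrightarrow> Phi (y + y') = Phi y + Phi y'"
  unfolding Phi_def by (rule lift_add[OF fc fgood_ff])

lemma Phi_sumT: "(\<And>i. i \<in> I \<Longrightarrow> h i \<in> cs_carrier T) \<Longrightarrow> Phi (sum h I) = (\<Sum>i\<in>I. Phi (h i))"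
  unfolding Phi_def by (rule lift_sumT[OF fc fgood_ff])

lemma Phi_car: "y \<in> cs_carrier T \<Longrightarrow> Phi y \<in> cs_carrier T'"
  using rep_car[of y] by (auto simp: Phi_sum intro!: T'.sum_car T'.sm_car g_car)

lemma Phi_even: "y \<in> cs_even T \<Longrightarrow> Phi y \<in> cs_even T'"
proof -
  assume "y \<in> cs_even T"
  then obtain I :: "('f\<times>'s) set" and a s where "finite I" "\<forall>i\<in>I. a i \<in> cs_even F" "y = (\<Sum>i\<in>I. \<beta> (a i) (s i))"
    using rep[of y "cs_even F"] T_even Fev by auto
  moreover then have "\<forall>i\<in>I. a i \<in> cs_carrier F" using Fev by auto
  ultimately show ?thesis by (auto simp: Phi_sum intro!: T'.sum_even T'.sm_even g_even)
qed

lemma Phi_odd: "y \<in> cs_odd T \<Longrightarrow> Phi y \<in> cs_odd T'"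
proof -
  assume "y \<in> cs_odd T"
  then obtain I :: "('f\<times>'s) set" and a s where "finite I" "\<forall>i\<in>I. a i \<in> cs_odd F" "y = (\<Sum>i\<in>I. \<beta> (a i) (s i))"
    using rep[of y "cs_odd F"] T_odd Fod by auto
  moreover then have "\<forall>i\<in>I. a i \<in> cs_carrier F" using Fod by auto
  ultimately show ?thesis by (auto simp: Phi_sum intro!: T'.sum_odd T'.sm_odd g_odd)
qed

lemma Phi_sm: "y \<in> cs_carrier T \<Longrightarrow> Phi (cs_smult T s y) = cs_smult T' (\<kappa> s) (Phi y)"
proof -
  assume "y \<in> cs_carrier T"
  then obtain I :: "('f\<times>'s) set" and a u where I: "finite I" "\<forall>i\<in>I. a i \<in> cs_carrier F" "y = (\<Sum>i\<in>I. \<beta> (a i) (u i))"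
    using rep_car by blast
  have "cs_smult T s y = (\<Sum>i\<in>I. \<beta> (a i) (s * u i))"
    using I by (simp add: T.sm_sum b_car b_sm)
  then have "Phi (cs_smult T s y) = (\<Sum>i\<in>I. cs_smult T' (\<kappa> (s * u i)) (g (a i)))"
    using I by (simp add: Phi_sum)
  also have "\<dots> = cs_smult T' (\<kappa> s) (\<Sum>i\<in>I. cs_smult T' (\<kappa> (u i)) (g (a i)))"
    using I by (simp add: T'.sm_sum T'.sm_car g_car k_mult T'.sm_mult)
  finally show ?thesis using I by (simp add: Phi_sum)
qed

lemma k_deltapow: "\<kappa> ((dr_delta D2 ^^ j) r) = (dr_delta D3 ^^ j) (\<kappa> r)"
  by (induction j) (auto simp: k_delta)

lemma Phi_der: "y \<in> cs_carrier T \<Longrightarrow> Phi (cs_der T y) = cs_der T' (Phi y)"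
proof -
  assume "y \<in> cs_carrier T"
  then obtain I :: "('f\<times>'s) set" and a u where I: "finite I" "\<forall>i\<in>I. a i \<in> cs_carrier F" "y = (\<Sum>i\<in>I. \<beta> (a i) (u i))"
    using rep_car by blast
  have "cs_der T y = (\<Sum>i\<in>I. \<beta> (cs_der F (a i)) (u i)) + (\<Sum>i\<in>I. \<beta> (a i) (dr_delta D2 (u i)))"
    using I by (simp add: T.der_sum b_car b_der sum.distrib)
  then have "Phi (cs_der T y) = (\<Sum>i\<in>I. cs_smult T' (\<kappa> (u i)) (g (cs_der F (a i))))
        + (\<Sum>i\<in>I. cs_smult T' (\<kappa> (dr_delta D2 (u i))) (g (a i)))"
    using I by (simp add: Phi_add sum_b_car Fder Phi_sum)
  also have "\<dots> = cs_der T' (\<Sum>i\<in>I. cs_smult T' (\<kappa> (u i)) (g (a i)))"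
    using I by (simp add: T'.der_sum T'.sm_car g_car T'.der_sm g_der k_delta sum.distrib)
  finally show ?thesis using I by (simp add: Phi_sum)
qed

lemma Phi_np1:
  assumes a: "a \<in> cs_carrier F" and b: "b \<in> cs_carrier F"
  shows "Phi (cs_nprod T n (\<beta> a r) (\<beta> b s)) = cs_nprod T' n (Phi (\<beta> a r)) (Phi (\<beta> b s))"
proof -
  obtain N where N: "\<forall>m\<ge>N. cs_nprod F m a b = 0" using Fvan[OF a b] by blast
  then have N': "\<forall>j\<ge>N. cs_nprod F (n + j) a b = 0" by auto
  have N'': "\<forall>j\<ge>N. cs_nprod T' (n + j) (g a) (g b) = 0"
    using N' by (simp add: g_np[OF a b, symmetric] g_zero)
  have "Phi (cs_nprod T n (\<beta> a r) (\<beta> b s)) =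
      (\<Sum>j<N. cs_smult T' (\<kappa> (dr_emb D2 (inverse (of_nat (fact j))) * (dr_delta D2 ^^ j) r * s))
         (g (cs_nprod F (n + j) a b)))"
    by (simp add: b_np[OF a b N'] Phi_sum Fnp a b)
  also have "\<dots> = (\<Sum>j<N. cs_smult T' (\<kappa> s) (cs_smult T' (dr_emb D3 (inverse (of_nat (fact j))) * (dr_delta D3 ^^ j) (\<kappa> r))
         (cs_nprod T' (n + j) (g a) (g b))))"
    by (rule sum.cong) (simp_all add: k_mult k_emb k_deltapow g_np a b T'.sm_mult[symmetric] T'.np_car g_car mult_ac)
  also have "\<dots> = cs_nprod T' n (cs_smult T' (\<kappa> r) (g a)) (cs_smult T' (\<kappa> s) (g b))"
    by (simp add: T'.np_sm2 T'.sm_car g_car a b T'.np_sm1[OF _ _ N''] T'.sm_sum T'.np_car)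
  finally show ?thesis by (simp add: Phi_b a b)
qed

lemma Phi_np: "y \<in> cs_carrier T \<Longrightarrow> z \<in> cs_carrier T \<Longrightarrow>
   Phi (cs_nprod T n y z) = cs_nprod T' n (Phi y) (Phi z)"
proof -
  assume yz: "y \<in> cs_carrier T" "z \<in> cs_carrier T"
  obtain I :: "('f\<times>'s) set" and a u
    where I: "finite I" "\<forall>i\<in>I. a i \<in> cs_carrier F" "y = (\<Sum>i\<in>I. \<beta> (a i) (u i))"
    using rep_car[OF yz(1)] by blast
  obtain J :: "('f\<times>'s) set" and b v
    where J: "finite J" "\<forall>i\<in>J. b i \<in> cs_carrier F" "z = (\<Sum>i\<in>J. \<beta> (b i) (v i))"
    using rep_car[OF yz(2)] by blast
  have "Phi (cs_nprod T n y z) = (\<Sum>i\<in>I. \<Sum>j\<in>J. Phi (cs_nprod T n (\<beta> (a i) (u i)) (\<beta> (b j) (v j))))"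
    using I J by (simp add: T.np_sum1 T.np_sum2 b_car sum_b_car Phi_sumT T.np_car T.sum_car sum.swap[of _ J])
  also have "\<dots> = (\<Sum>i\<in>I. \<Sum>j\<in>J. cs_nprod T' n (Phi (\<beta> (a i) (u i))) (Phi (\<beta> (b j) (v j))))"
    using I J by (simp add: Phi_np1)
  also have "\<dots> = cs_nprod T' n (Phi y) (Phi z)"
    using I J by (simp add: Phi_sum Phi_b T'.np_sum1 T'.np_sum2 T'.sm_car g_car T'.sum_car sum.swap[of _ J])
  finally show ?thesis .
qed

end



lemma iso_from_linv:
  assumes "csa_hom A B \<phi>" "\<And>x. x \<in> cs_carrier A \<Longrightarrow> \<psi> (\<phi> x) = x"
    "\<And>y. y \<in> cs_carrier B \<Longrightarrow> \<exists>x\<in>cs_carrier A. \<phi> x = y"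
  shows "csa_iso A B \<phi>"
proof -
  have "inj_on \<phi> (cs_carrier A)"
  proof (rule inj_onI)
    fix x y
    assume xy: "x \<in> cs_carrier A" "y \<in> cs_carrier A" "\<phi> x = \<phi> y"
    have "x = \<psi> (\<phi> x)" using assms(2)[OF xy(1)] by (rule sym)
    also have "\<dots> = \<psi> (\<phi> y)" using xy(3) by (rule arg_cong)
    also have "\<dots> = y" using assms(2)[OF xy(2)] .
    finally show "x = y" .
  qed
  moreover have "\<phi> ` cs_carrier A \<subseteq> cs_carrier B"
    using assms(1) unfolding csa_hom_def by (elim conjE)
  moreover have "cs_carrier B \<subseteq> \<phi> ` cs_carrier A"
    using assms(3) by force
  ultimately have "inj_on \<phi> (cs_carrier A) \<and> \<phi> ` cs_carrier A = cs_carrier B" by blast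
  then show ?thesis using assms(1) unfolding csa_iso_def bij_betw_def by simp
qed

lemma hom_comp:
  assumes "csa_hom A B \<phi>" "csa_hom B C \<psi>"
  shows "csa_hom A C (\<psi> \<circ> \<phi>)"
  using assms unfolding csa_hom_def by (simp add: image_subset_iff)

lemma iso_comp:
  assumes "csa_iso A B \<phi>" "csa_iso B C \<psi>"
  shows "csa_iso A C (\<psi> \<circ> \<phi>)"
  using assms unfolding csa_iso_def by (auto intro: hom_comp bij_betw_trans)

lemma iso_inv:
  assumes A: "conformal_superalgebra D A" and B: "conformal_superalgebra D B"
    and iso: "csa_iso A B \<phi>"
  shows "csa_iso B A (inv_into (cs_carrier A) \<phi>)"
proof -
  interpret A: csa D A by (rule csa.intro, rule A)
  interpret B: csa D B by (rule csa.intro, rule B)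
  let ?\<psi> = "inv_into (cs_carrier A) \<phi>"
  have h: "csa_hom A B \<phi>" and bij: "bij_betw \<phi> (cs_carrier A) (cs_carrier B)"
    using iso unfolding csa_iso_def by auto
  have inj: "inj_on \<phi> (cs_carrier A)" and im: "\<phi> ` cs_carrier A = cs_carrier B"
    using bij unfolding bij_betw_def by auto
  have pc: "\<And>x. x \<in> cs_carrier A \<Longrightarrow> \<phi> x \<in> cs_carrier B" using im by blast
  have add: "\<And>x y. x \<in> cs_carrier A \<Longrightarrow> y \<in> cs_carrier A \<Longrightarrow> \<phi> (x + y) = \<phi> x + \<phi> y"
    using h unfolding csa_hom_def by auto
  have psi_car: "\<And>y. y \<in> cs_carrier B \<Longrightarrow> ?\<psi> y \<in> cs_carrier A"
    using im by (metis inv_into_into)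
  have pp: "\<And>y. y \<in> cs_carrier B \<Longrightarrow> \<phi> (?\<psi> y) = y"
    using im by (metis f_inv_into_f)
  have psi_eq: "\<And>x y. x \<in> cs_carrier A \<Longrightarrow> \<phi> x = y \<Longrightarrow> ?\<psi> y = x"
    using inj by (metis inv_into_f_f)
  have hsm: "\<And>r x. x \<in> cs_carrier A \<Longrightarrow> \<phi> (cs_smult A r x) = cs_smult B r (\<phi> x)"
    and hder: "\<And>x. x \<in> cs_carrier A \<Longrightarrow> \<phi> (cs_der A x) = cs_der B (\<phi> x)"
    and hnp: "\<And>n x y. x \<in> cs_carrier A \<Longrightarrow> y \<in> cs_carrier A \<Longrightarrow> \<phi> (cs_nprod A n x y) = cs_nprod B n (\<phi> x) (\<phi> y)"
    and hev: "\<And>x. x \<in> cs_even A \<Longrightarrow> \<phi> x \<in> cs_even B"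
    and hod: "\<And>x. x \<in> cs_odd A \<Longrightarrow> \<phi> x \<in> cs_odd B"
    using h unfolding csa_hom_def by blast+
  have phi0: "\<phi> 0 = 0" using add[OF A.zero_car A.zero_car] by simp
  have ev: "?\<psi> y \<in> cs_even A" if y: "y \<in> cs_even B" for y
  proof -
    have yc: "y \<in> cs_carrier B" using y B.even_car by blast
    obtain e o' where eo: "?\<psi> y = e + o'" "e \<in> cs_even A" "o' \<in> cs_odd A"
      using psi_car[OF yc] A.car_split by blast
    have ec: "e \<in> cs_carrier A" and oc: "o' \<in> cs_carrier A" using eo A.even_car A.odd_car by auto
    have "y = \<phi> e + \<phi> o'" using pp[OF yc] eo add[OF ec oc] by simp
    then have "\<phi> o' = y - \<phi> e" by simp
    moreover have "\<phi> e \<in> cs_even B" using hev eo by blast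
    ultimately have "\<phi> o' \<in> cs_even B" using y B.add_even B.neg_even by (metis diff_conv_add_uminus)
    moreover have "\<phi> o' \<in> cs_odd B" using hod eo by blast
    ultimately have "\<phi> o' = 0" using B.even_odd by blast
    then have "o' = 0" using psi_eq[OF oc] psi_eq[OF A.zero_car phi0] by metis
    then show ?thesis using eo by simp
  qed
  have od: "?\<psi> y \<in> cs_odd A" if y: "y \<in> cs_odd B" for y
  proof -
    have yc: "y \<in> cs_carrier B" using y B.odd_car by blast
    obtain e o' where eo: "?\<psi> y = e + o'" "e \<in> cs_even A" "o' \<in> cs_odd A"
      using psi_car[OF yc] A.car_split by blast
    have ec: "e \<in> cs_carrier A" and oc: "o' \<in> cs_carrier A" using eo A.even_car A.odd_car by auto
    have "y = \<phi> e + \<phi> o'" using pp[OF yc] eo add[OF ec oc] by simp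
    then have "\<phi> e = y - \<phi> o'" by simp
    moreover have "\<phi> o' \<in> cs_odd B" using hod eo by blast
    ultimately have "\<phi> e \<in> cs_odd B" using y B.add_odd B.neg_odd by (metis diff_conv_add_uminus)
    moreover have "\<phi> e \<in> cs_even B" using hev eo by blast
    ultimately have "\<phi> e = 0" using B.even_odd by blast
    then have "e = 0" using psi_eq[OF ec] psi_eq[OF A.zero_car phi0] by metis
    then show ?thesis using eo by simp
  qed
  have hom: "csa_hom B A ?\<psi>"
    unfolding csa_hom_def
  proof (intro conjI ballI allI)
    show "?\<psi> ` cs_carrier B \<subseteq> cs_carrier A" using psi_car by blast
    show "?\<psi> ` cs_even B \<subseteq> cs_even A" using ev by blast
    show "?\<psi> ` cs_odd B \<subseteq> cs_odd A" using od by blast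
  next
    fix x y assume xy: "x \<in> cs_carrier B" "y \<in> cs_carrier B"
    show "?\<psi> (x + y) = ?\<psi> x + ?\<psi> y"
      by (rule psi_eq) (simp_all add: A.add_car psi_car xy add pp)
  next
    fix r x assume x: "x \<in> cs_carrier B"
    show "?\<psi> (cs_smult B r x) = cs_smult A r (?\<psi> x)"
      by (rule psi_eq) (simp_all add: x psi_car pp A.sm_car hsm)
  next
    fix x assume x: "x \<in> cs_carrier B"
    show "?\<psi> (cs_der B x) = cs_der A (?\<psi> x)"
      by (rule psi_eq) (simp_all add: x psi_car pp A.der_car hder)
  next
    fix n x y assume xy: "x \<in> cs_carrier B" "y \<in> cs_carrier B"
    show "?\<psi> (cs_nprod B n x y) = cs_nprod A n (?\<psi> x) (?\<psi> y)"
      by (rule psi_eq) (simp_all add: xy psi_car pp A.np_car hnp)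
  qed
  moreover have "bij_betw ?\<psi> (cs_carrier B) (cs_carrier A)"
    using bij by (rule bij_betw_inv_into)
  ultimately show ?thesis unfolding csa_iso_def by blast
qed



lemma root_nonzero: "(z::'k::field) ^ m = 1 \<Longrightarrow> m \<ge> 1 \<Longrightarrow> z \<noteq> 0"
  by (metis one_neq_zero power_0_left not_one_le_zero)

lemma root_powi_mod:
  fixes z :: "'k::field"
  assumes "z ^ m = 1" "m \<ge> 1"
  shows "z powi d = z ^ nat (d mod int m)"
proof -
  have z0: "z \<noteq> 0" using root_nonzero assms by blast
  have "d = int m * (d div int m) + d mod int m" by simp
  then have "z powi d = z powi (int m * (d div int m)) * z powi (d mod int m)"
    by (metis power_int_add z0)
  also have "z powi (int m * (d div int m)) = 1"
    by (simp add: power_int_mult assms(1))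
  also have "z powi (d mod int m) = z ^ nat (d mod int m)"
    using assms(2) by (metis power_int_of_nat pos_mod_sign of_nat_0_less_iff less_le_trans zero_less_one int_nat_eq
        linorder_not_less nat_0_le)
  finally show ?thesis by simp
qed

lemma root_powi_one:
  fixes z :: "'k::field"
  assumes "z ^ m = 1" "m \<ge> 1" "\<forall>j. 0 < j \<and> j < m \<longrightarrow> z ^ j \<noteq> 1"
  shows "z powi d = 1 \<longleftrightarrow> int m dvd d"
proof -
  have r: "z powi d = z ^ nat (d mod int m)" by (rule root_powi_mod[OF assms(1,2)])
  have lt: "nat (d mod int m) < m" using assms(2) by (simp add: nat_less_iff)
  show ?thesis
  proof
    assume "z powi d = 1"
    then have "nat (d mod int m) = 0" using r lt assms(3) by (metis gr0I)
    then show "int m dvd d" using assms(2) by (metis dvd_eq_mod_eq_0 nat_eq_iff2 of_nat_0 pos_mod_sign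
          of_nat_0_less_iff less_le_trans zero_less_one order_antisym)
  next
    assume "int m dvd d"
    then have "d mod int m = 0" by simp
    then show "z powi d = 1" using r by simp
  qed
qed

lemma root_geom:
  fixes w :: "'k::field"
  assumes "w ^ m = 1" "w \<noteq> 1"
  shows "(\<Sum>l<m. w ^ l) = 0"
  using geometric_sum[OF assms(2), of m] assms(1) by simp

lemma incl_single: "incl_RS m (Poly_Mapping.single j c) = Poly_Mapping.single (int m * j) (c::'k::field)"
  unfolding incl_RS_def by (cases "c = 0") auto

lemma pd_single: "puiseux_deriv m (Poly_Mapping.single i c) =
   Poly_Mapping.single (i - int m) (of_int i / of_nat m * (c::'k::field_char_0))"
  unfolding puiseux_deriv_def by (cases "c = 0") auto

lemma pd_pow: "\<exists>c'. (puiseux_deriv m ^^ l) (Poly_Mapping.single i (c::'k::field_char_0)) =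
   Poly_Mapping.single (i - int l * int m) c'"
proof (induction l)
  case 0 then show ?case by auto
next
  case (Suc l)
  then obtain c' where "(puiseux_deriv m ^^ l) (Poly_Mapping.single i c) = Poly_Mapping.single (i - int l * int m) c'"
    by blast
  then show ?case by (auto simp: pd_single algebra_simps)
qed

lemma single_mult_single: "Poly_Mapping.single i (a::'k::comm_ring_1) * Poly_Mapping.single j b = Poly_Mapping.single (i + j) (a * b)"
  by (rule mult_single)

lemma sum_only0:
  fixes h :: "nat \<Rightarrow> 'a::comm_monoid_add"
  assumes "N > 0" "\<And>j. j > 0 \<Longrightarrow> h j = 0"
  shows "(\<Sum>j<N. h j) = h 0"
proof -
  have "(\<Sum>j<N. h j) = (\<Sum>j\<in>{0}. h j)"
    by (rule sum.mono_neutral_right) (use assms in auto)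
  then show ?thesis by simp
qed



locale mainctx =
  fixes A :: "('k::{alg_closed_field, field_char_0}, 'a::ab_group_add) csa"
    and \<sigma> :: "'a \<Rightarrow> 'a"
    and m :: nat
    and \<xi> :: "nat \<Rightarrow> 'k"
    and B :: "(int \<Rightarrow>\<^sub>0 'k, 'b::ab_group_add) csa" and \<beta>B :: "'a \<Rightarrow> (int \<Rightarrow>\<^sub>0 'k) \<Rightarrow> 'b"
    and C :: "(int \<Rightarrow>\<^sub>0 'k, 'c::ab_group_add) csa" and \<beta>C :: "'a \<Rightarrow> (int \<Rightarrow>\<^sub>0 'k) \<Rightarrow> 'c"
    and D :: "(int \<Rightarrow>\<^sub>0 'k, 'd::ab_group_add) csa" and \<beta>D :: "'c \<Rightarrow> (int \<Rightarrow>\<^sub>0 'k) \<Rightarrow> 'd"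
    and E :: "(int \<Rightarrow>\<^sub>0 'k, 'e::ab_group_add) csa" and \<beta>E :: "'b \<Rightarrow> (int \<Rightarrow>\<^sub>0 'k) \<Rightarrow> 'e"
  assumes xi_prim: "\<forall>n\<ge>1. \<xi> n ^ n = 1 \<and> (\<forall>j. 0 < j \<and> j < n \<longrightarrow> \<xi> n ^ j \<noteq> 1)"
    and A_csa: "conformal_superalgebra kring A"
    and sigma_aut: "csa_iso A A \<sigma>"
    and m_pos: "m \<ge> 1"
    and sigma_period: "\<forall>x\<in>cs_carrier A. (\<sigma> ^^ m) x = x"
    and B_bc: "is_base_change kring (Sring m) const_laurent A B \<beta>B"
    and C_bc: "is_base_change kring Rring const_laurent A C \<beta>C"
    and D_bc: "is_base_change Rring (Sring m) (incl_RS m) C D \<beta>D"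
    and E_bc: "is_base_change Rring (Sring m) (incl_RS m) (loop_algebra m A \<sigma> (\<xi> m) B \<beta>B) E \<beta>E"
begin

abbreviation "\<zeta> \<equiv> \<xi> m"
abbreviation "L \<equiv> loop_algebra m A \<sigma> (\<xi> m) B \<beta>B"
abbreviation "eig \<equiv> eigenspace A \<sigma> (\<xi> m)"
abbreviation "tt i \<equiv> Poly_Mapping.single i (1::'k)"

sublocale A: csa kring A by (rule csa.intro, rule A_csa)
sublocale BB: bc kring "Sring m" const_laurent A B \<beta>B by (rule bc.intro, rule B_bc)
sublocale CC: bc kring Rring const_laurent A C \<beta>C by (rule bc.intro, rule C_bc)
sublocale DD: bc Rring "Sring m" "incl_RS m" C D \<beta>D by (rule bc.intro, rule D_bc)
sublocale EE: bc Rring "Sring m" "incl_RS m" L E \<beta>E by (rule bc.intro, rule E_bc)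

lemma zeta_m: "\<zeta> ^ m = 1" and zeta_prim: "\<forall>j. 0 < j \<and> j < m \<longrightarrow> \<zeta> ^ j \<noteq> 1"
  using xi_prim m_pos by auto
lemma zeta_nz: "\<zeta> \<noteq> 0" using root_nonzero[OF zeta_m m_pos] .

lemma kring_simps[simp]: "dr_emb kring c = c" "dr_delta kring r = 0"
  by (simp_all add: kring_def)
lemma Sring_simps[simp]: "dr_emb (Sring m) c = Poly_Mapping.single 0 c" "dr_delta (Sring m) = puiseux_deriv m"
  by (simp_all add: Sring_def)
lemma Rring_emb[simp]: "dr_emb Rring c = Poly_Mapping.single 0 c"
  by (simp add: Rring_def)
lemma const_laurent_eq[simp]: "const_laurent c = Poly_Mapping.single 0 c"
  by (simp add: const_laurent_def)

lemma incl_ext: "incl_RS m (1 :: int \<Rightarrow>\<^sub>0 'k) = 1"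
  "incl_RS m ((x :: int \<Rightarrow>\<^sub>0 'k) + y) = incl_RS m x + incl_RS m y"
  "incl_RS m ((x :: int \<Rightarrow>\<^sub>0 'k) * y) = incl_RS m x * incl_RS m y"
  "incl_RS m (dr_delta Rring (r :: int \<Rightarrow>\<^sub>0 'k)) = puiseux_deriv m (incl_RS m r)"
  by (insert DD.ext, unfold dring_ext_def, auto)
lemma incl_const[simp]: "incl_RS m (Poly_Mapping.single 0 c) = Poly_Mapping.single 0 (c::'k)"
  by (simp add: incl_single)
lemma dkS: "diff_kring (Sring m :: ('k, int \<Rightarrow>\<^sub>0 'k) dring)" using DD.ext unfolding dring_ext_def by auto

lemma s_hom: "csa_hom A A \<sigma>" using sigma_aut unfolding csa_iso_def by auto
lemma s_car: "x \<in> cs_carrier A \<Longrightarrow> \<sigma> x \<in> cs_carrier A"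
  and s_add: "x \<in> cs_carrier A \<Longrightarrow> y \<in> cs_carrier A \<Longrightarrow> \<sigma> (x + y) = \<sigma> x + \<sigma> y"
  and s_sm: "x \<in> cs_carrier A \<Longrightarrow> \<sigma> (cs_smult A c x) = cs_smult A c (\<sigma> x)"
  and s_der: "x \<in> cs_carrier A \<Longrightarrow> \<sigma> (cs_der A x) = cs_der A (\<sigma> x)"
  and s_np: "x \<in> cs_carrier A \<Longrightarrow> y \<in> cs_carrier A \<Longrightarrow> \<sigma> (cs_nprod A n x y) = cs_nprod A n (\<sigma> x) (\<sigma> y)"
  using s_hom unfolding csa_hom_def by blast+

lemma s_zero: "\<sigma> 0 = 0" using s_add[OF A.zero_car A.zero_car] by simp
lemma s_sum: "(\<And>i. i \<in> I \<Longrightarrow> g i \<in> cs_carrier A) \<Longrightarrow> \<sigma> (sum g I) = (\<Sum>i\<in>I. \<sigma> (g i))"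
  by (induction I rule: infinite_finite_induct) (auto simp: s_zero s_add A.sum_car)

lemma sp_car: "x \<in> cs_carrier A \<Longrightarrow> (\<sigma> ^^ l) x \<in> cs_carrier A"
  by (induction l) (auto simp: s_car)
lemma sp_add: "x \<in> cs_carrier A \<Longrightarrow> y \<in> cs_carrier A \<Longrightarrow> (\<sigma> ^^ l) (x + y) = (\<sigma> ^^ l) x + (\<sigma> ^^ l) y"
  by (induction l) (auto simp: s_add sp_car)
lemma sp_sm: "x \<in> cs_carrier A \<Longrightarrow> (\<sigma> ^^ l) (cs_smult A c x) = cs_smult A c ((\<sigma> ^^ l) x)"
  by (induction l) (auto simp: s_sm sp_car)

lemma eig_car: "x \<in> eig i \<Longrightarrow> x \<in> cs_carrier A"
  and eig_eq: "x \<in> eig i \<Longrightarrow> \<sigma> x = cs_smult A (\<zeta> powi i) x"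
  unfolding eigenspace_def by auto
lemma eigI: "x \<in> cs_carrier A \<Longrightarrow> \<sigma> x = cs_smult A (\<zeta> powi i) x \<Longrightarrow> x \<in> eig i"
  unfolding eigenspace_def by auto

lemma eig_zero: "0 \<in> eig i"
  by (rule eigI) (simp_all add: A.zero_car s_zero A.sm_zero)
lemma eig_add: "x \<in> eig i \<Longrightarrow> y \<in> eig i \<Longrightarrow> x + y \<in> eig i"
  by (rule eigI) (simp_all add: A.add_car eig_car s_add eig_eq A.sm_add)
lemma eig_sm: "x \<in> eig i \<Longrightarrow> cs_smult A c x \<in> eig i"
  by (rule eigI) (simp_all add: A.sm_car eig_car s_sm eig_eq A.sm_comm)
lemma eig_sum: "(\<And>j. j \<in> J \<Longrightarrow> g j \<in> eig i) \<Longrightarrow> sum g J \<in> eig i"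
  by (induction J rule: infinite_finite_induct) (auto simp: eig_zero eig_add)

lemma zeta_powi_shift: "\<zeta> powi (i + int m * j) = \<zeta> powi i"
  by (simp add: root_powi_mod[OF zeta_m m_pos])
lemma eig_shift: "x \<in> eig i \<Longrightarrow> x \<in> eig (i + int m * j)"
  unfolding eigenspace_def by (simp add: zeta_powi_shift)

lemma eig_der: "x \<in> eig i \<Longrightarrow> cs_der A x \<in> eig i"
  apply (rule eigI)
  using A.der_sm_emb[of x "\<zeta> powi i"] by (simp_all add: A.der_car eig_car s_der eig_eq)

lemma eig_np: "x \<in> eig i \<Longrightarrow> y \<in> eig j \<Longrightarrow> cs_nprod A n x y \<in> eig (i + j)"
  apply (rule eigI)
   apply (simp add: A.np_car eig_car)
  using A.np_emb1'[of x "cs_smult A (\<zeta> powi j) y" n "\<zeta> powi i"]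
  by (simp add: eig_car s_np eig_eq A.sm_car A.np_sm2 A.np_car A.sm_mult[symmetric] power_int_add zeta_nz)

lemma sp_eig: "x \<in> eig i \<Longrightarrow> (\<sigma> ^^ l) x = cs_smult A ((\<zeta> powi i) ^ l) x"
proof (induction l)
  case 0 then show ?case by (simp add: A.sm_one eig_car)
next
  case (Suc l)
  then show ?case by (simp add: s_sm eig_car eig_eq A.sm_mult[symmetric] A.sm_car mult.commute)
qed

end



context mainctx begin

abbreviation "\<zeta>' \<equiv> inverse \<zeta>"

definition comp :: "nat \<Rightarrow> 'a \<Rightarrow> 'a" where
  "comp k a = cs_smult A (inverse (of_nat m)) (\<Sum>l<m. cs_smult A (\<zeta>' ^ (k * l)) ((\<sigma> ^^ l) a))"

lemma comp_car: "a \<in> cs_carrier A \<Longrightarrow> comp k a \<in> cs_carrier A"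
  unfolding comp_def by (auto intro!: A.sm_car A.sum_car sp_car)

lemma comp_add: "a \<in> cs_carrier A \<Longrightarrow> b \<in> cs_carrier A \<Longrightarrow> comp k (a + b) = comp k a + comp k b"
  unfolding comp_def
  by (simp add: sp_add sp_car A.sm_add A.sm_car sum.distrib A.sum_car)

lemma comp_sm: "a \<in> cs_carrier A \<Longrightarrow> comp k (cs_smult A c a) = cs_smult A c (comp k a)"
  unfolding comp_def
  by (simp add: sp_sm sp_car A.sm_car A.sum_car A.sm_sum A.sm_comm[of _ c])

lemma zeta'_m: "\<zeta>' ^ m = 1" by (simp add: power_inverse zeta_m)

lemma comp_eig: "a \<in> cs_carrier A \<Longrightarrow> comp k a \<in> eig (int k)"
proof (rule eigI)
  assume a: "a \<in> cs_carrier A"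
  show "comp k a \<in> cs_carrier A" by (rule comp_car[OF a])
  define h where "h l = cs_smult A (\<zeta>' ^ (k * l)) ((\<sigma> ^^ l) a)" for l
  have hc: "h l \<in> cs_carrier A" for l unfolding h_def by (simp add: A.sm_car sp_car a)
  have sh: "\<sigma> (h l) = cs_smult A (\<zeta> ^ k) (h (Suc l))" for l
  proof -
    have e1: "\<zeta>' ^ (k * Suc l) = \<zeta>' ^ (k * l) * \<zeta>' ^ k"
      by (simp add: power_add)
    have e2: "\<zeta> ^ k * \<zeta>' ^ k = 1"
      using zeta_nz by (simp add: power_mult_distrib[symmetric])
    have "\<zeta> ^ k * \<zeta>' ^ (k * Suc l) = \<zeta>' ^ (k * l) * (\<zeta> ^ k * \<zeta>' ^ k)"
      unfolding e1 by (simp add: mult_ac)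
    also have "\<dots> = \<zeta>' ^ (k * l)" by (simp add: e2)
    finally have "\<zeta> ^ k * \<zeta>' ^ (k * Suc l) = \<zeta>' ^ (k * l)" .
    then show ?thesis unfolding h_def
      using A.sm_mult[OF s_car[OF sp_car[OF a]], of "\<zeta> ^ k" "\<zeta>' ^ (k * Suc l)", symmetric]
      by (simp add: s_sm sp_car a)
  qed
  have hm: "h m = h 0" unfolding h_def
    by (simp add: sigma_period a power_mult zeta'_m mult.commute[of k])
  have shift: "(\<Sum>l<m. h (Suc l)) = (\<Sum>l<m. h l)"
  proof -
    have e1: "(\<Sum>l<Suc m. h l) = h 0 + (\<Sum>l<m. h (Suc l))" by (rule sum.lessThan_Suc_shift)
    have e2: "(\<Sum>l<Suc m. h l) = h 0 + (\<Sum>l<m. h l)" by (simp add: hm add.commute)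
    from e1 e2 show ?thesis by simp
  qed
  have "\<sigma> (comp k a) = cs_smult A (inverse (of_nat m)) (\<Sum>l<m. \<sigma> (h l))"
    unfolding comp_def h_def[symmetric] by (simp add: s_sm A.sum_car hc s_sum)
  also have "\<dots> = cs_smult A (inverse (of_nat m)) (cs_smult A (\<zeta> ^ k) (\<Sum>l<m. h (Suc l)))"
    by (simp add: sh A.sm_sum hc)
  also have "\<dots> = cs_smult A (\<zeta> powi int k) (comp k a)"
    unfolding comp_def h_def[symmetric] shift by (simp add: A.sm_comm A.sum_car hc)
  finally show "\<sigma> (comp k a) = cs_smult A (\<zeta> powi int k) (comp k a)" .
qed

lemma of_nat_m_nz: "(of_nat m :: 'k) \<noteq> 0" using m_pos by simp

lemma comp_eigvec:
  assumes x: "x \<in> eig i"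
  shows "comp k x = (if int m dvd (i - int k) then x else 0)"
proof -
  define w where "w = \<zeta> powi (i - int k)"
  have xc: "x \<in> cs_carrier A" using eig_car[OF x] .
  have w: "\<zeta>' ^ k * \<zeta> powi i = w"
    unfolding w_def using zeta_nz
    by (simp add: power_int_diff power_inverse field_simps)
  have wl: "\<zeta>' ^ (k * l) * (\<zeta> powi i) ^ l = w ^ l" for l
    by (metis w power_mult mult.commute power_mult_distrib)
  have "comp k x = cs_smult A (inverse (of_nat m)) (\<Sum>l<m. cs_smult A (w ^ l) x)"
    unfolding comp_def
    by (rule arg_cong[where f="cs_smult A _"], rule sum.cong)
       (simp_all add: sp_eig[OF x] A.sm_mult[symmetric] xc wl)
  also have "\<dots> = cs_smult A (inverse (of_nat m) * (\<Sum>l<m. w ^ l)) x"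
    by (simp add: A.sm_rsum[OF xc, symmetric] A.sm_mult xc)
  finally have c: "comp k x = cs_smult A (inverse (of_nat m) * (\<Sum>l<m. w ^ l)) x" .
  show ?thesis
  proof (cases "int m dvd (i - int k)")
    case True
    then have "w = 1" unfolding w_def using root_powi_one[OF zeta_m m_pos zeta_prim] by blast
    then show ?thesis using True c of_nat_m_nz by (simp add: A.sm_one xc)
  next
    case False
    then have w1: "w \<noteq> 1" unfolding w_def using root_powi_one[OF zeta_m m_pos zeta_prim] by blast
    have "w ^ m = 1" unfolding w_def
      by (metis power_int_of_nat power_int_mult mult.commute zeta_m power_int_1_left)
    then have "(\<Sum>l<m. w ^ l) = 0" using root_geom w1 by blast
    then show ?thesis using False c by (simp add: A.sm_rzero xc)
  qed
qed

lemma comp_sum: "a \<in> cs_carrier A \<Longrightarrow> (\<Sum>k<m. comp k a) = a"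
proof -
  assume a: "a \<in> cs_carrier A"
  have inner: "(\<Sum>k<m. \<zeta>' ^ (k * l)) = (if l = 0 then of_nat m else 0)" if "l < m" for l
  proof (cases "l = 0")
    case True then show ?thesis by simp
  next
    case False
    have ne: "\<zeta>' ^ l \<noteq> 1"
      using zeta_prim False that by (simp add: power_inverse)
    have "(\<zeta>' ^ l) ^ m = 1" by (metis power_mult mult.commute zeta'_m power_one)
    then have "(\<Sum>k<m. (\<zeta>' ^ l) ^ k) = 0" using root_geom ne by blast
    then show ?thesis using False by (simp add: power_mult mult.commute[of _ l])
  qed
  have "(\<Sum>k<m. comp k a) = cs_smult A (inverse (of_nat m))
      (\<Sum>k<m. \<Sum>l<m. cs_smult A (\<zeta>' ^ (k * l)) ((\<sigma> ^^ l) a))"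
    unfolding comp_def by (simp add: A.sm_sum A.sm_car A.sum_car sp_car a)
  also have "(\<Sum>k<m. \<Sum>l<m. cs_smult A (\<zeta>' ^ (k * l)) ((\<sigma> ^^ l) a))
      = (\<Sum>l<m. cs_smult A (\<Sum>k<m. \<zeta>' ^ (k * l)) ((\<sigma> ^^ l) a))"
    by (subst sum.swap) (simp add: A.sm_rsum sp_car a)
  also have "\<dots> = (\<Sum>l<m. cs_smult A (if l = 0 then of_nat m else 0) ((\<sigma> ^^ l) a))"
    by (rule sum.cong) (simp_all add: inner)
  also have "\<dots> = cs_smult A (of_nat m) a"
    by (subst sum_only0) (use m_pos in \<open>auto simp: A.sm_rzero sp_car a\<close>)
  finally show ?thesis using of_nat_m_nz by (simp add: A.sm_mult[symmetric] a A.sm_one)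
qed

end



context mainctx begin

abbreviation "LC \<equiv> loop_carrier A \<sigma> (\<xi> m) \<beta>B"

lemma L_simps[simp]: "cs_carrier L = LC" "cs_even L = LC \<inter> cs_even B" "cs_odd L = LC \<inter> cs_odd B"
  "cs_smult L r x = cs_smult B (incl_RS m r) x" "cs_der L = cs_der B" "cs_nprod L = cs_nprod B"
  by (simp_all add: loop_algebra_def)

lemma LC_iff: "v \<in> LC \<longleftrightarrow> (\<exists>I x. finite I \<and> (\<forall>i\<in>I. x i \<in> eig i) \<and> v = (\<Sum>i\<in>I. \<beta>B (x i) (tt i)))"
  unfolding loop_carrier_def by blast

lemma lc_B: "v \<in> LC \<Longrightarrow> v \<in> cs_carrier B"
  unfolding LC_iff by (auto intro!: BB.sum_b_car eig_car)

lemma lc_elem: "x \<in> eig i \<Longrightarrow> \<beta>B x (tt i) \<in> LC"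
  unfolding LC_iff by (intro exI[of _ "{i}"] exI[of _ "\<lambda>_. x"]) auto

lemma fclosed_A: "fclosed A"
  unfolding fclosed_def by (simp add: A.zero_car A.add_car A.sm_car)

lemma bB0: "\<beta>B 0 s = 0" by (rule BB.b_zero1[OF fclosed_A])

lemma lc_zero: "0 \<in> LC"
  unfolding LC_iff by (intro exI[of _ "{}"]) auto

lemma lc_add: assumes "v1 \<in> LC" "v2 \<in> LC" shows "v1 + v2 \<in> LC"
proof -
  obtain I x where I: "finite I" "\<forall>i\<in>I. x i \<in> eig i" "v1 = (\<Sum>i\<in>I. \<beta>B (x i) (tt i))"
    using assms(1) unfolding LC_iff by blast
  obtain J y where J: "finite J" "\<forall>i\<in>J. y i \<in> eig i" "v2 = (\<Sum>i\<in>J. \<beta>B (y i) (tt i))"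
    using assms(2) unfolding LC_iff by blast
  define x' where "x' i = (if i \<in> I then x i else 0)" for i
  define y' where "y' i = (if i \<in> J then y i else 0)" for i
  have x'e: "x' i \<in> eig i" for i unfolding x'_def using I eig_zero by auto
  have y'e: "y' i \<in> eig i" for i unfolding y'_def using J eig_zero by auto
  have "v1 = (\<Sum>i\<in>I \<union> J. \<beta>B (x' i) (tt i))"
    unfolding I(3) by (rule sum.mono_neutral_cong_left) (auto simp: I J x'_def bB0)
  moreover have "v2 = (\<Sum>i\<in>I \<union> J. \<beta>B (y' i) (tt i))"
    unfolding J(3) by (rule sum.mono_neutral_cong_left) (auto simp: I J y'_def bB0)
  moreover have "\<beta>B (x' i + y' i) (tt i) = \<beta>B (x' i) (tt i) + \<beta>B (y' i) (tt i)" for i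
    using BB.b_add1 eig_car x'e y'e by blast
  ultimately have "v1 + v2 = (\<Sum>i\<in>I \<union> J. \<beta>B (x' i + y' i) (tt i))"
    by (simp add: sum.distrib)
  then show ?thesis unfolding LC_iff using I J x'e y'e eig_add
    by (intro exI[of _ "I \<union> J"] exI[of _ "\<lambda>i. x' i + y' i"]) auto
qed

lemma lc_sum: "(\<And>i. i \<in> I \<Longrightarrow> g i \<in> LC) \<Longrightarrow> sum g I \<in> LC"
  by (induction I rule: infinite_finite_induct) (auto simp: lc_zero lc_add)

lemma lc_single: assumes "x \<in> eig i" shows "\<beta>B x (Poly_Mapping.single (i + int m * j) c) \<in> LC"
proof -
  have "Poly_Mapping.single (i + int m * j) c = const_laurent c * tt (i + int m * j)"
    by (simp add: mult_single)
  then have "\<beta>B x (Poly_Mapping.single (i + int m * j) c) = \<beta>B (cs_smult A c x) (tt (i + int m * j))"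
    by (simp add: BB.b_bal eig_car[OF assms])
  then show ?thesis using lc_elem eig_shift eig_sm assms by metis
qed

lemma lc_single': assumes "x \<in> eig i" "int m dvd (p - i)" shows "\<beta>B x (Poly_Mapping.single p c) \<in> LC"
proof -
  obtain j where "p - i = int m * j" using assms(2) by (auto elim: dvdE)
  then have "p = i + int m * j" by simp
  then show ?thesis using lc_single[OF assms(1)] by simp
qed

lemma lc_sm: assumes "v \<in> LC" shows "cs_smult B (incl_RS m r) v \<in> LC"
proof -
  obtain I x where I: "finite I" "\<forall>i\<in>I. x i \<in> eig i" "v = (\<Sum>i\<in>I. \<beta>B (x i) (tt i))"
    using assms unfolding LC_iff by blast
  have Ic: "\<forall>i\<in>I. x i \<in> cs_carrier A" using I eig_car by blast
  have ir: "incl_RS m r * tt i = (\<Sum>j\<in>Poly_Mapping.keys r.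
      Poly_Mapping.single (i + int m * j) (Poly_Mapping.lookup r j))" for i
    unfolding incl_RS_def by (simp add: sum_distrib_right mult_single add.commute)
  have "cs_smult B (incl_RS m r) v = (\<Sum>i\<in>I. \<Sum>j\<in>Poly_Mapping.keys r.
      \<beta>B (x i) (Poly_Mapping.single (i + int m * j) (Poly_Mapping.lookup r j)))"
    using I(3) Ic by (simp add: BB.T.sm_sum BB.b_car BB.b_sm ir BB.b_sum2)
  then show ?thesis using I by (auto intro!: lc_sum lc_single)
qed

lemma fclosed_L: "fclosed L"
  unfolding fclosed_def by (simp add: lc_zero lc_add lc_sm)

lemma lc_der: assumes "v \<in> LC" shows "cs_der B v \<in> LC"
proof -
  obtain I x where I: "finite I" "\<forall>i\<in>I. x i \<in> eig i" "v = (\<Sum>i\<in>I. \<beta>B (x i) (tt i))"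
    using assms unfolding LC_iff by blast
  have Ic: "\<forall>i\<in>I. x i \<in> cs_carrier A" using I eig_car by blast
  have "cs_der B v = (\<Sum>i\<in>I. \<beta>B (cs_der A (x i)) (tt i)
      + \<beta>B (x i) (Poly_Mapping.single (i - int m) (of_int i / of_nat m)))"
    using I(3) Ic by (simp add: BB.T.der_sum BB.b_car BB.b_der pd_single)
  moreover have "\<beta>B (cs_der A (x i)) (tt i)
      + \<beta>B (x i) (Poly_Mapping.single (i - int m) (of_int i / of_nat m)) \<in> LC" if "i \<in> I" for i
    using I(2) that by (intro lc_add lc_elem eig_der lc_single') auto
  ultimately show ?thesis by (simp add: lc_sum)
qed

lemma lc_np1: assumes "x \<in> eig i" "y \<in> eig j"
  shows "cs_nprod B n (\<beta>B x (tt i)) (\<beta>B y (tt j)) \<in> LC"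
proof -
  have xc: "x \<in> cs_carrier A" and yc: "y \<in> cs_carrier A" using assms eig_car by auto
  obtain N where N: "\<forall>n\<ge>N. cs_nprod A n x y = 0" using A.np_vanish[OF xc yc] by blast
  then have N': "\<forall>l\<ge>N. cs_nprod A (n + l) x y = 0" by auto
  have tm: "\<beta>B (cs_nprod A (n + l) x y)
       (Poly_Mapping.single 0 (inverse (of_nat (fact l))) * (puiseux_deriv m ^^ l) (tt i) * tt j) \<in> LC" for l
  proof -
    obtain c' where c': "(puiseux_deriv m ^^ l) (tt i) = Poly_Mapping.single (i - int l * int m) c'"
      using pd_pow by blast
    have e: "Poly_Mapping.single 0 (inverse (of_nat (fact l))) * (puiseux_deriv m ^^ l) (tt i) * tt j
       = Poly_Mapping.single ((i + j) + int m * (- int l)) (inverse (of_nat (fact l)) * c')"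
      unfolding c' by (simp add: mult_single algebra_simps)
    show ?thesis unfolding e by (rule lc_single, rule eig_np[OF assms])
  qed
  show ?thesis unfolding BB.b_np[OF xc yc N'] Sring_simps by (rule lc_sum, rule tm)
qed

lemma lc_np: assumes "v1 \<in> LC" "v2 \<in> LC" shows "cs_nprod B n v1 v2 \<in> LC"
proof -
  obtain I x where I: "finite I" "\<forall>i\<in>I. x i \<in> eig i" "v1 = (\<Sum>i\<in>I. \<beta>B (x i) (tt i))"
    using assms(1) unfolding LC_iff by blast
  obtain J y where J: "finite J" "\<forall>i\<in>J. y i \<in> eig i" "v2 = (\<Sum>i\<in>J. \<beta>B (y i) (tt i))"
    using assms(2) unfolding LC_iff by blast
  have Ic: "\<forall>i\<in>I. x i \<in> cs_carrier A" using I eig_car by blast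
  have Jc: "\<forall>i\<in>J. y i \<in> cs_carrier A" using J eig_car by blast
  have "cs_nprod B n v1 v2 = (\<Sum>i\<in>I. \<Sum>j\<in>J. cs_nprod B n (\<beta>B (x i) (tt i)) (\<beta>B (y j) (tt j)))"
    using I(3) J(3) Ic Jc by (simp add: BB.T.np_sum1 BB.T.np_sum2 BB.b_car BB.sum_b_car sum.swap[of _ J])
  then show ?thesis using I J by (auto intro!: lc_sum lc_np1)
qed

end



context mainctx begin

lemma pd1: "puiseux_deriv m (1 :: int \<Rightarrow>\<^sub>0 'k) = 0"
  using pd_single[of m 0 "1::'k"] by simp

lemma fclosed_C: "fclosed C"
  unfolding fclosed_def by (simp add: CC.T.zero_car CC.T.add_car CC.T.sm_car)

sublocale PC: bchom kring Rring const_laurent A C \<beta>C "Sring m" B "incl_RS m" "\<lambda>a. \<beta>B a 1"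
  apply unfold_locales
  subgoal using B_bc unfolding is_base_change_def by blast
  subgoal by (rule fclosed_A)
  subgoal by (rule A.der_car)
  subgoal by (rule A.np_car)
  subgoal by (rule A.np_vanish)
  subgoal by (rule A.even_car)
  subgoal by (rule A.odd_car)
  subgoal by (rule incl_ext(2))
  subgoal by (rule incl_ext(3))
  subgoal by simp
  subgoal using incl_ext(4) by simp
  subgoal by (rule BB.b_car)
  subgoal by (rule BB.b_even, assumption, rule A.even_car)
  subgoal by (rule BB.b_odd, assumption, rule A.odd_car)
  subgoal by (rule BB.b_add1)
  subgoal by (simp add: BB.b_bal BB.b_sm)
  subgoal by (simp add: BB.b_der pd1 BB.b_zero2)
  subgoal for a b n
  proof -
    assume ab: "a \<in> cs_carrier A" "b \<in> cs_carrier A"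
    obtain N where N: "\<forall>n\<ge>N. cs_nprod A n a b = 0" using A.np_vanish[OF ab] by blast
    then have N': "\<forall>j\<ge>Suc N. cs_nprod A (n + j) a b = 0" by auto
    have z: "(dr_delta (Sring m) ^^ j) (1 :: int \<Rightarrow>\<^sub>0 'k) = 0" if "j > 0" for j
      using diff_kring_deltapow1[OF dkS that] .
    have "cs_nprod B n (\<beta>B a 1) (\<beta>B b 1) = (\<Sum>j<Suc N. \<beta>B (cs_nprod A (n + j) a b)
        (dr_emb (Sring m) (inverse (of_nat (fact j))) * (dr_delta (Sring m) ^^ j) 1 * 1))"
      by (rule BB.b_np[OF ab N'])
    also have "\<dots> = \<beta>B (cs_nprod A n a b) 1"
      by (subst sum_only0) (simp_all add: z BB.b_zero2 A.np_car ab diff_kring_facts(2)[OF dkS] del: Sring_simps)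
    finally show ?thesis by (rule sym)
  qed
  done

sublocale PD: bchom Rring "Sring m" "incl_RS m" C D \<beta>D "Sring m" B id PC.Phi
  apply unfold_locales
  subgoal using B_bc unfolding is_base_change_def by blast
  subgoal by (rule fclosed_C)
  subgoal by (rule CC.T.der_car)
  subgoal by (rule CC.T.np_car)
  subgoal by (rule CC.T.np_vanish)
  subgoal by (rule CC.T.even_car)
  subgoal by (rule CC.T.odd_car)
  subgoal by simp
  subgoal by simp
  subgoal by simp
  subgoal by simp
  subgoal by (rule PC.Phi_car)
  subgoal by (rule PC.Phi_even)
  subgoal by (rule PC.Phi_odd)
  subgoal by (rule PC.Phi_add)
  subgoal by (simp add: PC.Phi_sm)
  subgoal by (rule PC.Phi_der)
  subgoal by (rule PC.Phi_np)
  done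

sublocale PE: bchom Rring "Sring m" "incl_RS m" L E \<beta>E "Sring m" B id id
  apply unfold_locales
  subgoal using B_bc unfolding is_base_change_def by blast
  subgoal by (rule fclosed_L)
  subgoal by (simp add: lc_der)
  subgoal by (simp add: lc_np)
  subgoal by (simp add: BB.T.np_vanish lc_B)
  subgoal by simp
  subgoal by simp
  subgoal by simp
  subgoal by simp
  subgoal by simp
  subgoal by simp
  subgoal by (simp add: lc_B)
  subgoal by simp
  subgoal by simp
  subgoal by simp
  subgoal by simp
  subgoal by simp
  subgoal by simp
  done

end



context mainctx begin

lemma PD_hom: "csa_hom D B PD.Phi"
  unfolding csa_hom_def
  by (auto simp: PD.Phi_car PD.Phi_even PD.Phi_odd PD.Phi_add PD.Phi_sm PD.Phi_der PD.Phi_np)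

lemma PE_hom: "csa_hom E B PE.Phi"
  unfolding csa_hom_def
  by (auto simp: PE.Phi_car PE.Phi_even PE.Phi_odd PE.Phi_add PE.Phi_sm PE.Phi_der PE.Phi_np)

definition fD :: "'a \<Rightarrow> (int \<Rightarrow>\<^sub>0 'k) \<Rightarrow> 'd" where "fD a s = \<beta>D (\<beta>C a 1) s"
definition PsiD where "PsiD = lift B \<beta>B (cs_carrier A) fD"

lemma fgood_fD: "fgood A const_laurent fD"
  unfolding fgood_def add2_def fD_def
proof (intro conjI ballI allI)
  fix a s s' assume a: "a \<in> cs_carrier A"
  show "\<beta>D (\<beta>C a 1) (s + s') = \<beta>D (\<beta>C a 1) s + \<beta>D (\<beta>C a 1) s'"
    by (rule DD.b_add2, rule CC.b_car[OF a])
next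
  fix a a' s assume a: "a \<in> cs_carrier A" "a' \<in> cs_carrier A"
  show "\<beta>D (\<beta>C (a + a') 1) s = \<beta>D (\<beta>C a 1) s + \<beta>D (\<beta>C a' 1) s"
    by (simp add: CC.b_add1 a DD.b_add1 CC.b_car)
next
  fix a r s assume a: "a \<in> cs_carrier A"
  have "\<beta>C (cs_smult A r a) 1 = cs_smult C (Poly_Mapping.single 0 r) (\<beta>C a 1)"
    by (simp add: CC.b_bal a CC.b_sm)
  then show "\<beta>D (\<beta>C (cs_smult A r a) 1) s = \<beta>D (\<beta>C a 1) (const_laurent r * s)"
    by (simp add: DD.b_bal CC.b_car a)
qed

lemma PsiD_sum: assumes "finite I" "\<And>i. i \<in> I \<Longrightarrow> a i \<in> cs_carrier A"
  shows "PsiD (\<Sum>i\<in>I. \<beta>B (a i) (s i)) = (\<Sum>i\<in>I. \<beta>D (\<beta>C (a i) 1) (s i))"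
  unfolding PsiD_def using BB.lift_sum[OF fclosed_A fgood_fD assms] by (simp add: fD_def)

lemma PsiD_sumT: "(\<And>i. i \<in> I \<Longrightarrow> g i \<in> cs_carrier B) \<Longrightarrow> PsiD (sum g I) = (\<Sum>i\<in>I. PsiD (g i))"
  unfolding PsiD_def by (rule BB.lift_sumT[OF fclosed_A fgood_fD])

lemma PsiD_PD1:
  assumes c: "c \<in> cs_carrier C"
  shows "PsiD (PD.Phi (\<beta>D c s)) = \<beta>D c s"
proof -
  obtain I :: "('a \<times> (int \<Rightarrow>\<^sub>0 'k)) set" and a r where I: "finite I" "\<forall>i\<in>I. a i \<in> cs_carrier A"
    "c = (\<Sum>i\<in>I. \<beta>C (a i) (r i))"
    using CC.rep_car[OF c] by blast
  have "PD.Phi (\<beta>D c s) = cs_smult B s (PC.Phi c)" by (simp add: PD.Phi_b c)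
  also have "\<dots> = (\<Sum>i\<in>I. \<beta>B (a i) (s * (incl_RS m (r i) * 1)))"
    using I by (simp add: PC.Phi_sum BB.b_sm BB.T.sm_sum BB.b_car)
  finally have "PsiD (PD.Phi (\<beta>D c s)) = (\<Sum>i\<in>I. \<beta>D (\<beta>C (a i) 1) (s * (incl_RS m (r i) * 1)))"
    using I by (simp add: PsiD_sum)
  also have "\<dots> = (\<Sum>i\<in>I. \<beta>D (\<beta>C (a i) (r i)) s)"
  proof (rule sum.cong)
    fix i assume i: "i \<in> I"
    have "\<beta>C (a i) (r i) = cs_smult C (r i) (\<beta>C (a i) 1)" using I(2) i by (simp add: CC.b_sm)
    then show "\<beta>D (\<beta>C (a i) 1) (s * (incl_RS m (r i) * 1)) = \<beta>D (\<beta>C (a i) (r i)) s"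
      using I(2) i by (simp add: DD.b_bal CC.b_car mult.commute)
  qed simp
  also have "\<dots> = \<beta>D c s" using I by (simp add: DD.b_sum1[OF fclosed_C] CC.b_car)
  finally show ?thesis .
qed

lemma PsiD_PD: "y \<in> cs_carrier D \<Longrightarrow> PsiD (PD.Phi y) = y"
proof -
  assume y: "y \<in> cs_carrier D"
  obtain I :: "('c \<times> (int \<Rightarrow>\<^sub>0 'k)) set" and c s where I: "finite I" "\<forall>i\<in>I. c i \<in> cs_carrier C"
    "y = (\<Sum>i\<in>I. \<beta>D (c i) (s i))"
    using DD.rep_car[OF y] by blast
  show ?thesis using I
    by (simp add: PD.Phi_sumT DD.b_car PsiD_sumT PD.Phi_car PsiD_PD1)
qed

lemma PD_surj: "y \<in> cs_carrier B \<Longrightarrow> \<exists>x\<in>cs_carrier D. PD.Phi x = y"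
proof -
  assume y: "y \<in> cs_carrier B"
  obtain I :: "('a \<times> (int \<Rightarrow>\<^sub>0 'k)) set" and a s where I: "finite I" "\<forall>i\<in>I. a i \<in> cs_carrier A"
    "y = (\<Sum>i\<in>I. \<beta>B (a i) (s i))"
    using BB.rep_car[OF y] by blast
  let ?x = "\<Sum>i\<in>I. \<beta>D (\<beta>C (a i) 1) (s i)"
  have "?x \<in> cs_carrier D" using I by (simp add: DD.sum_b_car CC.b_car)
  moreover have "PD.Phi ?x = y"
    using I by (simp add: PD.Phi_sum CC.b_car PC.Phi_b incl_ext(1) BB.b_sm)
  ultimately show ?thesis by blast
qed

lemma PD_iso: "csa_iso D B PD.Phi"
  by (rule iso_from_linv[OF PD_hom PsiD_PD PD_surj])

end



context mainctx begin

definition fE :: "'a \<Rightarrow> (int \<Rightarrow>\<^sub>0 'k) \<Rightarrow> 'e" where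
  "fE a s = (\<Sum>k<m. \<beta>E (\<beta>B (comp k a) (tt (int k))) (tt (- int k) * s))"
definition PsiE where "PsiE = lift B \<beta>B (cs_carrier A) fE"

lemma compLC: "a \<in> cs_carrier A \<Longrightarrow> \<beta>B (comp k a) (tt (int k)) \<in> LC"
  by (rule lc_elem, rule comp_eig)

lemma bE0: "\<beta>E 0 s = 0" using EE.b_zero1[OF fclosed_L] by simp

lemma fgood_fE: "fgood A const_laurent fE"
  unfolding fgood_def add2_def
proof (intro conjI ballI allI)
  fix a s s' assume a: "a \<in> cs_carrier A"
  show "fE a (s + s') = fE a s + fE a s'"
    unfolding fE_def using a by (simp add: distrib_left EE.b_add2 compLC sum.distrib)
next
  fix a a' s assume a: "a \<in> cs_carrier A" "a' \<in> cs_carrier A"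
  show "fE (a + a') s = fE a s + fE a' s"
    unfolding fE_def using a
    by (simp add: comp_add BB.b_add1 comp_car EE.b_add1[simplified] compLC sum.distrib)
next
  fix a r s assume a: "a \<in> cs_carrier A"
  have "\<beta>E (\<beta>B (comp k (cs_smult A r a)) (tt (int k))) u
      = \<beta>E (\<beta>B (comp k a) (tt (int k))) (Poly_Mapping.single 0 r * u)" for k u
  proof -
    have "\<beta>B (comp k (cs_smult A r a)) (tt (int k))
        = cs_smult B (incl_RS m (Poly_Mapping.single 0 r)) (\<beta>B (comp k a) (tt (int k)))"
      using a by (simp add: comp_sm BB.b_bal comp_car BB.b_sm)
    then show ?thesis using EE.b_bal[of "\<beta>B (comp k a) (tt (int k))" "Poly_Mapping.single 0 r" u] compLC[OF a]
      by simp
  qed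
  then show "fE (cs_smult A r a) s = fE a (const_laurent r * s)"
    unfolding fE_def by (simp add: mult.left_commute)
qed

lemma PsiE_sum: assumes "finite I" "\<And>i. i \<in> I \<Longrightarrow> a i \<in> cs_carrier A"
  shows "PsiE (\<Sum>i\<in>I. \<beta>B (a i) (s i)) = (\<Sum>i\<in>I. fE (a i) (s i))"
  unfolding PsiE_def using BB.lift_sum[OF fclosed_A fgood_fE assms] by simp

lemma PsiE_sumT: "(\<And>i. i \<in> I \<Longrightarrow> g i \<in> cs_carrier B) \<Longrightarrow> PsiE (sum g I) = (\<Sum>i\<in>I. PsiE (g i))"
  unfolding PsiE_def by (rule BB.lift_sumT[OF fclosed_A fgood_fE])

lemma fE_eig:
  assumes x: "x \<in> eig i"
  shows "fE x (s * tt i) = \<beta>E (\<beta>B x (tt i)) s"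
proof -
  define k0 where "k0 = nat (i mod int m)"
  define q where "q = i div int m"
  have k0m: "k0 < m" unfolding k0_def using m_pos by (simp add: nat_less_iff)
  have ik: "i = int k0 + int m * q" unfolding k0_def q_def using m_pos
    by (simp add: mult.commute)
  have xc: "x \<in> cs_carrier A" using eig_car[OF x] .
  have other: "\<beta>E (\<beta>B (comp k x) (tt (int k))) (tt (- int k) * (s * tt i)) = 0" if "k < m" "k \<noteq> k0" for k
  proof -
    have "\<not> int m dvd (i - int k)"
    proof
      assume "int m dvd (i - int k)"
      then have "i mod int m = int k mod int m" by (simp add: mod_eq_dvd_iff)
      then have "i mod int m = int k" using that by simp
      then show False using that unfolding k0_def by simp
    qed
    then show ?thesis by (simp add: comp_eigvec[OF x] bB0 bE0)
  qed
  have "fE x (s * tt i) = \<beta>E (\<beta>B (comp k0 x) (tt (int k0))) (tt (- int k0) * (s * tt i))"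
    unfolding fE_def
    by (rule sum.mono_neutral_right[where S="{k0}", simplified]) (auto simp: k0m other)
  also have "comp k0 x = x" using comp_eigvec[OF x, of k0] ik by simp
  also have "tt (- int k0) * (s * tt i) = incl_RS m (tt q) * s"
    by (simp add: incl_single mult_single ik mult.commute mult.left_commute)
  also have "\<beta>E (\<beta>B x (tt (int k0))) (incl_RS m (tt q) * s)
      = \<beta>E (cs_smult B (incl_RS m (tt q)) (\<beta>B x (tt (int k0)))) s"
    using EE.b_bal[of "\<beta>B x (tt (int k0))" "tt q" s] lc_elem[OF eig_shift[OF x, of "- q", unfolded ik]]
    by (simp add: algebra_simps)
  also have "cs_smult B (incl_RS m (tt q)) (\<beta>B x (tt (int k0))) = \<beta>B x (tt i)"
    using xc by (simp add: BB.b_sm incl_single mult_single ik add.commute)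
  finally show ?thesis .
qed

lemma PsiE_PE1:
  assumes v: "v \<in> LC"
  shows "PsiE (PE.Phi (\<beta>E v s)) = \<beta>E v s"
proof -
  obtain I x where I: "finite I" "\<forall>i\<in>I. x i \<in> eig i" "v = (\<Sum>i\<in>I. \<beta>B (x i) (tt i))"
    using v unfolding LC_iff by blast
  have Ic: "\<forall>i\<in>I. x i \<in> cs_carrier A" using I eig_car by blast
  have "PE.Phi (\<beta>E v s) = cs_smult B s v" using v by (simp add: PE.Phi_b)
  also have "\<dots> = (\<Sum>i\<in>I. \<beta>B (x i) (s * tt i))"
    using I(3) Ic by (simp add: BB.T.sm_sum BB.b_car BB.b_sm)
  finally have "PsiE (PE.Phi (\<beta>E v s)) = (\<Sum>i\<in>I. fE (x i) (s * tt i))"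
    using I(1) Ic by (simp add: PsiE_sum)
  also have "\<dots> = (\<Sum>i\<in>I. \<beta>E (\<beta>B (x i) (tt i)) s)"
    using I(2) by (simp add: fE_eig)
  also have "\<dots> = \<beta>E v s"
    using I(2,3) EE.b_sum1[OF fclosed_L, of I "\<lambda>i. \<beta>B (x i) (tt i)" s] lc_elem by simp
  finally show ?thesis .
qed

lemma PsiE_PE: "y \<in> cs_carrier E \<Longrightarrow> PsiE (PE.Phi y) = y"
proof -
  assume y: "y \<in> cs_carrier E"
  obtain I :: "('b \<times> (int \<Rightarrow>\<^sub>0 'k)) set" and c s where I: "finite I" "\<forall>i\<in>I. c i \<in> LC"
    "y = (\<Sum>i\<in>I. \<beta>E (c i) (s i))"
    using EE.rep_car[OF y] by auto
  show ?thesis using I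
    by (simp add: PE.Phi_sumT EE.b_car PsiE_sumT PE.Phi_car PsiE_PE1)
qed

lemma ttinv: "tt (- j) * ((s :: int \<Rightarrow>\<^sub>0 'k) * tt j) = s"
proof -
  have "tt (- j) * (s * tt j) = s * (tt (- j) * tt j)" by (simp add: mult.commute mult.left_commute)
  also have "tt (- j) * tt j = 1" by (simp add: mult_single)
  finally show ?thesis by simp
qed

lemma PE_surj1:
  assumes a: "a \<in> cs_carrier A"
  shows "\<exists>x\<in>cs_carrier E. PE.Phi x = \<beta>B a s"
proof -
  let ?x = "\<Sum>k<m. \<beta>E (\<beta>B (comp k a) (tt (int k))) (tt (- int k) * s)"
  have xin: "?x \<in> cs_carrier E" using a by (intro EE.T.sum_car EE.b_car) (simp add: compLC)
  have e1: "PE.Phi ?x = (\<Sum>k<m. \<beta>B (comp k a) s)"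
    using a by (simp add: PE.Phi_sumT EE.b_car compLC PE.Phi_b BB.b_sm comp_car mult.assoc ttinv)
  have e2: "(\<Sum>k<m. \<beta>B (comp k a) s) = \<beta>B a s"
    using a by (simp add: BB.b_sum1[OF fclosed_A, symmetric] comp_car comp_sum)
  have "PE.Phi ?x = \<beta>B a s" using e1 e2 by simp
  then show ?thesis using xin by blast
qed

lemma PE_surj: "y \<in> cs_carrier B \<Longrightarrow> \<exists>x\<in>cs_carrier E. PE.Phi x = y"
proof -
  assume y: "y \<in> cs_carrier B"
  obtain I :: "('a \<times> (int \<Rightarrow>\<^sub>0 'k)) set" and a s where I: "finite I" "\<forall>i\<in>I. a i \<in> cs_carrier A"
    "y = (\<Sum>i\<in>I. \<beta>B (a i) (s i))"
    using BB.rep_car[OF y] by blast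
  have ex: "\<forall>i\<in>I. \<exists>x. x \<in> cs_carrier E \<and> PE.Phi x = \<beta>B (a i) (s i)"
    using PE_surj1 I(2) by blast
  from bchoice[OF ex] obtain x where x: "\<forall>i\<in>I. x i \<in> cs_carrier E \<and> PE.Phi (x i) = \<beta>B (a i) (s i)"
    by blast
  have "(\<Sum>i\<in>I. x i) \<in> cs_carrier E" using x by (auto intro!: EE.T.sum_car)
  moreover have "PE.Phi (\<Sum>i\<in>I. x i) = y" using x I(3) by (simp add: PE.Phi_sumT)
  ultimately show ?thesis by blast
qed

lemma PE_iso: "csa_iso E B PE.Phi"
  by (rule iso_from_linv[OF PE_hom PsiE_PE PE_surj])

lemma result: "csa_isomorphic E D"
proof -
  have "csa_iso B D (inv_into (cs_carrier D) PD.Phi)"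
    by (rule iso_inv[OF DD.T_csa BB.T_csa PD_iso])
  then have "csa_iso E D (inv_into (cs_carrier D) PD.Phi \<circ> PE.Phi)"
    by (rule iso_comp[OF PE_iso])
  then show ?thesis unfolding csa_isomorphic_def by blast
qed

end


theorem mainTheorem2:
  fixes A :: "('k::{alg_closed_field, field_char_0}, 'a::ab_group_add) csa"
    and \<sigma> :: "'a \<Rightarrow> 'a"
    and m :: nat
    and \<xi> :: "nat \<Rightarrow> 'k"
    and B :: "(int \<Rightarrow>\<^sub>0 'k, 'b::ab_group_add) csa" and \<beta>B :: "'a \<Rightarrow> (int \<Rightarrow>\<^sub>0 'k) \<Rightarrow> 'b"
    and C :: "(int \<Rightarrow>\<^sub>0 'k, 'c::ab_group_add) csa" and \<beta>C :: "'a \<Rightarrow> (int \<Rightarrow>\<^sub>0 'k) \<Rightarrow> 'c"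
    and D :: "(int \<Rightarrow>\<^sub>0 'k, 'd::ab_group_add) csa" and \<beta>D :: "'c \<Rightarrow> (int \<Rightarrow>\<^sub>0 'k) \<Rightarrow> 'd"
    and E :: "(int \<Rightarrow>\<^sub>0 'k, 'e::ab_group_add) csa" and \<beta>E :: "'b \<Rightarrow> (int \<Rightarrow>\<^sub>0 'k) \<Rightarrow> 'e"
  assumes xi_prim: "\<forall>n\<ge>1. \<xi> n ^ n = 1 \<and> (\<forall>j. 0 < j \<and> j < n \<longrightarrow> \<xi> n ^ j \<noteq> 1)"
    and xi_compat: "\<forall>l\<ge>1. \<forall>n\<ge>1. \<xi> (l * n) ^ l = \<xi> n"
    and A_csa: "conformal_superalgebra kring A"
    and sigma_aut: "csa_iso A A \<sigma>"
    and m_pos: "m \<ge> 1"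
    and sigma_period: "\<forall>x\<in>cs_carrier A. (\<sigma> ^^ m) x = x"
    and B_bc: "is_base_change kring (Sring m) const_laurent A B \<beta>B"
    and C_bc: "is_base_change kring Rring const_laurent A C \<beta>C"
    and D_bc: "is_base_change Rring (Sring m) (incl_RS m) C D \<beta>D"
    and E_bc: "is_base_change Rring (Sring m) (incl_RS m) (loop_algebra m A \<sigma> (\<xi> m) B \<beta>B) E \<beta>E"
  shows "csa_isomorphic E D"
proof -
  have "mainctx A \<sigma> m \<xi> B \<beta>B C \<beta>C D \<beta>D E \<beta>E"
    unfolding mainctx_def using xi_prim A_csa sigma_aut m_pos sigma_period B_bc C_bc D_bc E_bc by blast
  then show ?thesis by (rule mainctx.result)
qed

end
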